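(* Let $q$ be a prime power and $n$ a positive integer such that at least one of the following holds: ($q\ge 567$ and $n\ge 16$), ($q\ge 435$ and $n\ge 24$), ($q\ge 381$ and $n\ge 32$), ($q\ge 352$ and $n\ge 40$), ($q\ge 334$ and $n\ge 48$), ($q\ge 301$ and $n\ge 80$). Then for any integer $k\in[0,n/8]$, if there exist $k$-normal elements in $\mathbb{F}_{q^n}$ over $\mathbb{F}_q$, at least one of them is also primitive.
   Context: An element $\alpha\in\mathbb{F}_{q^n}$ is $k$-normal over $\mathbb{F}_q$ if the $\mathbb{F}_q$-vector space spanned by $\alpha,\alpha^q,\dots,\alpha^{q^{n-1}}$ has dimension $n-k$. An element is primitive if it generates the multiplicative group $\mathbb{F}_{q^n}^*$. *)

theory Defs
  imports "HOL-Computational_Algebra.Primes"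
begin

text \<open>A subfield F of the ambient field (the copy of F_q inside F_{q^n}).\<close>
definition is_subfield :: "'a::field set \<Rightarrow> bool" where
  "is_subfield F \<longleftrightarrow> 0 \<in> F \<and> 1 \<in> F \<and>
     (\<forall>x\<in>F. \<forall>y\<in>F. x + y \<in> F \<and> x * y \<in> F) \<and>
     (\<forall>x\<in>F. - x \<in> F) \<and> (\<forall>x\<in>F. x \<noteq> 0 \<longrightarrow> inverse x \<in> F)"

definition Fspan :: "'a::field set \<Rightarrow> ('i \<Rightarrow> 'a) \<Rightarrow> 'i set \<Rightarrow> 'a set" where
  "Fspan F v I = {(\<Sum>i\<in>I. c i * v i) | c. \<forall>i\<in>I. c i \<in> F}"

definition Findep :: "'a::field set \<Rightarrow> ('i \<Rightarrow> 'a) \<Rightarrow> 'i set \<Rightarrow> bool" where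
  "Findep F v I \<longleftrightarrow> (\<forall>c. (\<forall>i\<in>I. c i \<in> F) \<and> (\<Sum>i\<in>I. c i * v i) = 0 \<longrightarrow> (\<forall>i\<in>I. c i = 0))"

text \<open>alpha is k-normal over F (|F| = q) in an extension of degree n: the F-span of
  alpha, alpha^q, ..., alpha^(q^(n-1)) has dimension n - k, i.e. it has a basis
  consisting of n - k of these conjugates.\<close>
definition k_normal :: "'a::field set \<Rightarrow> nat \<Rightarrow> nat \<Rightarrow> nat \<Rightarrow> 'a \<Rightarrow> bool" where
  "k_normal F q n k \<alpha> \<longleftrightarrow> k \<le> n \<and>
     (\<exists>B \<subseteq> {..<n}. card B = n - k \<and> Findep F (\<lambda>i. \<alpha> ^ (q ^ i)) B \<and>
        Fspan F (\<lambda>i. \<alpha> ^ (q ^ i)) B = Fspan F (\<lambda>i. \<alpha> ^ (q ^ i)) {..<n})"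

definition primitive_elem :: "'a::field \<Rightarrow> bool" where
  "primitive_elem \<alpha> \<longleftrightarrow> \<alpha> \<noteq> 0 \<and> (\<forall>x. x \<noteq> 0 \<longrightarrow> (\<exists>i::nat. x = \<alpha> ^ i))"

definition prime_power :: "nat \<Rightarrow> bool" where
  "prime_power q \<longleftrightarrow> (\<exists>p m. prime p \<and> m > 0 \<and> q = p ^ m)"

end

theory Submission
  imports Defs "HOL-Algebra.Multiplicative_Group"
begin


lemma pow_card_closed:
  fixes S :: "'a::field set"
  assumes fin: "finite S" and z: "0 \<in> S"
    and cl: "\<And>x y. x \<in> S \<Longrightarrow> y \<in> S \<Longrightarrow> x * y \<in> S"
    and inv: "\<And>x. x \<in> S \<Longrightarrow> x \<noteq> 0 \<Longrightarrow> inverse x \<in> S"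
    and c: "c \<in> S"
  shows "c ^ card S = c"
proof (cases "c = 0")
  case True
  have "card S > 0" using fin z by (auto simp: card_gt_0_iff)
  then show ?thesis using True by (simp add: power_0_left)
next
  case False
  have "card S > 0" using fin z by (auto simp: card_gt_0_iff)
  then have cS: "card S = Suc (card (S - {0}))" using fin z by (simp add: card_Diff_singleton)
  have "(\<Prod>y\<in>S-{0}. c * y) = (\<Prod>y\<in>S-{0}. y)"
    by (rule prod.reindex_bij_witness[of _ "\<lambda>y. inverse c * y" "\<lambda>y. c * y"])
       (use False c cl inv in auto)
  moreover have "(\<Prod>y\<in>S-{0}. c * y) = c ^ card (S - {0}) * (\<Prod>y\<in>S-{0}. y)"
    by (simp add: prod.distrib)
  moreover have "(\<Prod>y\<in>S-{0}. y) \<noteq> 0" using fin by auto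
  ultimately have "c ^ card (S - {0}) = 1" by auto
  then show ?thesis using cS by simp
qed

lemma of_nat_card_zero:
  fixes S :: "'a::field set"
  assumes fin: "finite S" and o: "1 \<in> S"
    and cl: "\<And>x y. x \<in> S \<Longrightarrow> y \<in> S \<Longrightarrow> x + y \<in> S"
    and ng: "\<And>x. x \<in> S \<Longrightarrow> - x \<in> S"
  shows "of_nat (card S) = (0::'a)"
proof -
  have "(\<Sum>y\<in>S. 1 + y) = (\<Sum>y\<in>S. y)"
    by (rule sum.reindex_bij_witness[of _ "\<lambda>y. y + - 1" "\<lambda>y. 1 + y"])
       (use o cl ng in \<open>auto simp: algebra_simps\<close>, metis cl ng o diff_conv_add_uminus)
  then show ?thesis by (simp add: sum.distrib)
qed

definition ringU :: "'a::field ring" where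
  "ringU = \<lparr> carrier = UNIV, mult = (*), one = 1, zero = 0, add = (+) \<rparr>"

lemma ringU_field: "field (ringU :: 'a::field ring)"
proof -
  have "cring (ringU :: 'a ring)"
    by unfold_locales (auto simp: ringU_def Units_def algebra_simps intro: exI[of _ "-x" for x])
  then interpret cring "ringU :: 'a ring" .
  {
    fix x :: 'a
    have "x \<noteq> 0 \<Longrightarrow> \<exists>xa. xa * x = 1 \<and> x * xa = 1"
      by (intro exI[of _ "inverse x"], auto)
  } note [simp] = this
  show ?thesis
    by (unfold_locales) (auto simp: ringU_def Units_def)
qed

lemma ringU_pow: "x [^]\<^bsub>(ringU::'a::field ring)\<^esub> (i::nat) = x ^ i"
  by (induct i) (simp_all add: ringU_def)

lemma mult_group_gen:
  "\<exists>g::'a::{field,finite}. g \<noteq> 0 \<and> (\<forall>x. x \<noteq> 0 \<longrightarrow> (\<exists>i::nat. x = g ^ i))"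
proof -
  have fld: "field (ringU::'a ring)" by (rule ringU_field)
  obtain a where a: "a \<in> carrier (mult_of (ringU::'a ring))"
    and gen: "carrier (mult_of (ringU::'a ring)) = {a [^]\<^bsub>ringU\<^esub> i |i::nat. i \<in> UNIV}"
    using field.finite_field_mult_group_has_gen[OF fld] by (auto simp: ringU_def)
  have "carrier (mult_of (ringU::'a ring)) = UNIV - {0}" by (simp add: ringU_def)
  then have a0: "a \<noteq> 0" and g: "UNIV - {0} = {a ^ i |i. i \<in> (UNIV::nat set)}" using a gen by (auto simp: ringU_pow)
  show ?thesis
  proof (intro exI[of _ a] conjI allI impI)
    fix x :: 'a assume "x \<noteq> 0"
    then have "x \<in> UNIV - {0}" by simp
    then show "\<exists>i. x = a ^ i" unfolding g by auto
  qed (rule a0)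
qed

locale ctx =
  fixes F :: "'a::{field,finite} set" and q n :: nat
  assumes pp: "prime_power q" and npos: "n > 0" and sub: "is_subfield F"
    and cardF: "card F = q" and cardU: "card (UNIV::'a set) = q ^ n"
begin

lemma F0: "0 \<in> F" and F1: "1 \<in> F"
  and Fadd: "x \<in> F \<Longrightarrow> y \<in> F \<Longrightarrow> x + y \<in> F"
  and Fmul: "x \<in> F \<Longrightarrow> y \<in> F \<Longrightarrow> x * y \<in> F"
  and Fneg: "x \<in> F \<Longrightarrow> - x \<in> F"
  and Finv: "x \<in> F \<Longrightarrow> x \<noteq> 0 \<Longrightarrow> inverse x \<in> F"
  using sub unfolding is_subfield_def by auto

lemma Fminus: "x \<in> F \<Longrightarrow> y \<in> F \<Longrightarrow> x - y \<in> F"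
  using Fadd[of x "-y"] Fneg[of y] by simp

lemma finF: "finite F" by simp

lemma q_ge2: "q \<ge> 2"
proof -
  have "{0,1} \<subseteq> F" using F0 F1 by auto
  then have "card {0::'a,1} \<le> card F" by (intro card_mono) auto
  then show ?thesis using cardF by simp
qed

lemma F_pow: "c \<in> F \<Longrightarrow> c ^ q = c"
  using pow_card_closed[OF finF F0 Fmul Finv] cardF by auto

lemma F_pow_pow: "c \<in> F \<Longrightarrow> c ^ (q ^ i) = c"
proof (induct i)
  case (Suc i)
  then show ?case by (simp add: power_mult F_pow mult.commute)
qed simp

lemma U_pow: "(x::'a) ^ (q ^ n) = x"
  using pow_card_closed[of "UNIV::'a set" x] cardU by simp

lemma U_pow_mult: "(x::'a) ^ (q ^ (n * j)) = x"
proof (induct j)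
  case (Suc j)
  have "x ^ (q ^ (n * Suc j)) = (x ^ (q ^ (n*j))) ^ (q ^ n)"
    by (simp add: power_add power_mult[symmetric] mult.commute)
  then show ?case using Suc U_pow by simp
qed simp

lemma U_pow_mod: "(x::'a) ^ (q ^ i) = x ^ (q ^ (i mod n))"
proof -
  have "i = i mod n + n * (i div n)" by simp
  then have "x ^ (q ^ i) = (x ^ (q ^ (n * (i div n)))) ^ (q ^ (i mod n))"
    by (metis power_add power_mult mult.commute)
  then show ?thesis using U_pow_mult by simp
qed

lemma q_char: "of_nat q = (0::'a)"
  using of_nat_card_zero[OF finF F1 Fadd Fneg] cardF by simp

lemma char_prime: "prime CHAR('a)"
  by (intro prime_CHAR_semidom finite_imp_CHAR_pos) simp

lemma q_CHAR_pow: "\<exists>e. q = CHAR('a) ^ e"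
proof -
  obtain p m where p: "prime p" "m > 0" "q = p ^ m" using pp unfolding prime_power_def by auto
  have "CHAR('a) dvd q" using q_char of_nat_eq_0_iff_char_dvd by blast
  then have "CHAR('a) dvd p" using p char_prime prime_dvd_power by blast
  then have "CHAR('a) = p" using p char_prime by (metis prime_nat_iff prime_gt_1_nat less_not_refl)
  then show ?thesis using p by auto
qed

lemma frob_add: "((x::'a) + y) ^ (q ^ i) = x ^ (q ^ i) + y ^ (q ^ i)"
proof -
  obtain e where e: "q = CHAR('a) ^ e" using q_CHAR_pow by auto
  show ?thesis by (rule freshmans_dream'[OF char_prime, of _ "e*i"]) (simp add: e power_mult)
qed

lemma frob_sum: "(sum (f::'b \<Rightarrow> 'a) A) ^ (q ^ i) = (\<Sum>j\<in>A. f j ^ (q ^ i))"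
proof -
  obtain e where e: "q = CHAR('a) ^ e" using q_CHAR_pow by auto
  show ?thesis by (rule freshmans_dream_sum'[OF char_prime, of _ "e*i"]) (simp add: e power_mult)
qed

lemma frob_neg: "(- (x::'a)) ^ (q ^ i) = - (x ^ (q ^ i))"
proof -
  have "(x + - x) ^ (q ^ i) = 0" using q_ge2 by simp
  then show ?thesis by (simp only: frob_add) (simp add: add_eq_0_iff)
qed

lemma frob_minus: "((x::'a) - y) ^ (q ^ i) = x ^ (q ^ i) - y ^ (q ^ i)"
  using frob_add[of x "-y" i] frob_neg[of y i] by simp

end


context ctx begin

lemma span_zero: "0 \<in> Fspan F v I"
  unfolding Fspan_def by (auto intro!: exI[of _ "\<lambda>_. 0"] F0)

lemma span_add: "x \<in> Fspan F v I \<Longrightarrow> y \<in> Fspan F v I \<Longrightarrow> x + y \<in> Fspan F v I"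
proof -
  assume "x \<in> Fspan F v I" "y \<in> Fspan F v I"
  then obtain c d where c: "\<forall>i\<in>I. c i \<in> F" "x = (\<Sum>i\<in>I. c i * v i)"
    and d: "\<forall>i\<in>I. d i \<in> F" "y = (\<Sum>i\<in>I. d i * v i)" unfolding Fspan_def by auto
  have "x + y = (\<Sum>i\<in>I. (c i + d i) * v i)" using c d by (simp add: sum.distrib distrib_right)
  then show ?thesis unfolding Fspan_def using c d Fadd by (auto intro!: exI[of _ "\<lambda>i. c i + d i"])
qed

lemma span_smul: "a \<in> F \<Longrightarrow> x \<in> Fspan F v I \<Longrightarrow> a * x \<in> Fspan F v I"
proof -
  assume a: "a \<in> F" "x \<in> Fspan F v I"
  then obtain c where c: "\<forall>i\<in>I. c i \<in> F" "x = (\<Sum>i\<in>I. c i * v i)" unfolding Fspan_def by auto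
  have "a * x = (\<Sum>i\<in>I. (a * c i) * v i)" using c by (simp add: sum_distrib_left mult.assoc)
  then show ?thesis unfolding Fspan_def using c a Fmul by (auto intro!: exI[of _ "\<lambda>i. a * c i"])
qed

lemma span_neg: "x \<in> Fspan F v I \<Longrightarrow> - x \<in> Fspan F v I"
  using span_smul[of "-1" x v I] Fneg[OF F1] by simp

lemma span_diff: "x \<in> Fspan F v I \<Longrightarrow> y \<in> Fspan F v I \<Longrightarrow> x - y \<in> Fspan F v I"
  using span_add[of x v I "-y"] span_neg[of y v I] by simp

lemma span_gen: "finite I \<Longrightarrow> j \<in> I \<Longrightarrow> v j \<in> Fspan F v I"
proof -
  assume fI: "finite I" and j: "j \<in> I"
  have "(\<Sum>i\<in>I. (if i = j then 1 else 0) * v i) = (\<Sum>i\<in>I. (if i = j then v i else 0))"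
    by (rule sum.cong) auto
  also have "\<dots> = v j" using fI j by (simp add: sum.delta)
  finally show ?thesis unfolding Fspan_def
    by (auto intro!: exI[of _ "\<lambda>i. if i = j then 1 else 0"] simp: F0 F1)
qed

lemma span_finsum: "finite A \<Longrightarrow> (\<And>a. a \<in> A \<Longrightarrow> f a \<in> Fspan F v I) \<Longrightarrow> sum f A \<in> Fspan F v I"
  by (induct A rule: finite_induct) (auto intro: span_zero span_add)

lemma span_mono: "finite I \<Longrightarrow> (\<And>i. i \<in> I \<Longrightarrow> v i \<in> Fspan F w J) \<Longrightarrow> Fspan F v I \<subseteq> Fspan F w J"
proof
  fix x assume fI: "finite I" and h: "\<And>i. i \<in> I \<Longrightarrow> v i \<in> Fspan F w J" and "x \<in> Fspan F v I"
  then obtain c where c: "\<forall>i\<in>I. c i \<in> F" "x = (\<Sum>i\<in>I. c i * v i)" unfolding Fspan_def by auto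
  show "x \<in> Fspan F w J" unfolding c(2) by (rule span_finsum[OF fI]) (use c h in \<open>auto intro: span_smul\<close>)
qed

lemma card_span_indep:
  assumes fin: "finite I" and ind: "Findep F v I"
  shows "card (Fspan F v I) = q ^ card I"
proof -
  let ?E = "PiE I (\<lambda>_. F)"
  let ?f = "\<lambda>c. \<Sum>i\<in>I. c i * v i"
  have eq: "Fspan F v I = ?f ` ?E"
  proof
    show "Fspan F v I \<subseteq> ?f ` ?E"
    proof
      fix x assume "x \<in> Fspan F v I"
      then obtain c where c: "\<forall>i\<in>I. c i \<in> F" "x = ?f c" unfolding Fspan_def by auto
      have r: "restrict c I \<in> ?E" using c by auto
      have e2: "x = ?f (restrict c I)" unfolding c(2) by (rule sum.cong) auto
      show "x \<in> ?f ` ?E" using e2 r by (rule image_eqI[where f="\<lambda>c. \<Sum>i\<in>I. c i * v i"])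
    qed
    show "?f ` ?E \<subseteq> Fspan F v I"
    proof (rule image_subsetI)
      fix c assume "c \<in> ?E"
      then show "?f c \<in> Fspan F v I" unfolding Fspan_def
        by (intro CollectI exI[of _ c]) (simp add: PiE_iff)
    qed
  qed
  have inj: "inj_on ?f ?E"
  proof
    fix c d assume c: "c \<in> ?E" and d: "d \<in> ?E" and e: "?f c = ?f d"
    have "(\<Sum>i\<in>I. (c i - d i) * v i) = (\<Sum>i\<in>I. c i * v i) - (\<Sum>i\<in>I. d i * v i)"
      by (simp only: left_diff_distrib sum_subtractf)
    also have "\<dots> = 0" by (simp add: e)
    finally have "(\<Sum>i\<in>I. (c i - d i) * v i) = 0" .
    moreover have "\<forall>i\<in>I. c i - d i \<in> F" using c d by (auto simp: PiE_iff intro!: Fminus)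
    ultimately have X: "(\<forall>i\<in>I. c i - d i \<in> F) \<and> (\<Sum>i\<in>I. (c i - d i) * v i) = 0" by (intro conjI)
    have "\<forall>i\<in>I. c i - d i = 0"
      by (rule ind[unfolded Findep_def, THEN spec[of _ "\<lambda>i. c i - d i"], THEN mp, OF X])
    then show "c = d" by (intro PiE_ext[OF c d]) simp
  qed
  have "card (Fspan F v I) = card ?E" unfolding eq using inj by (rule card_image)
  also have "\<dots> = q ^ card I" using fin by (simp add: card_PiE cardF)
  finally show ?thesis .
qed

lemma span_remove:
  assumes fin: "finite I" and j: "j \<in> I" and vj: "v j \<in> Fspan F v (I - {j})"
  shows "Fspan F v (I - {j}) = Fspan F v I"
proof
  have f2: "finite (I - {j})" using fin by simp
  show "Fspan F v (I - {j}) \<subseteq> Fspan F v I"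
  proof (rule span_mono[OF f2])
    fix i assume "i \<in> I - {j}" then show "v i \<in> Fspan F v I" using span_gen[OF fin] by simp
  qed
  show "Fspan F v I \<subseteq> Fspan F v (I - {j})"
  proof (rule span_mono[OF fin])
    fix i assume i: "i \<in> I" show "v i \<in> Fspan F v (I - {j})"
    proof (cases "i = j")
      case True then show ?thesis using vj by simp
    next
      case False then show ?thesis using span_gen[OF f2, of i v] i by simp
    qed
  qed
qed

lemma exists_basis:
  "finite I \<Longrightarrow> \<exists>B\<subseteq>I. Findep F v B \<and> Fspan F v B = Fspan F v I"
proof (induct "card I" arbitrary: I rule: less_induct)
  case less
  show ?case
  proof (cases "Findep F v I")
    case True then show ?thesis by (intro exI[of _ I]) simp
  next
    case False
    then have "\<exists>c. (\<forall>i\<in>I. c i \<in> F) \<and> (\<Sum>i\<in>I. c i * v i) = 0 \<and> (\<exists>j\<in>I. c j \<noteq> 0)"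
      unfolding Findep_def by simp
    then obtain c where c: "\<forall>i\<in>I. c i \<in> F" "(\<Sum>i\<in>I. c i * v i) = 0" and cj: "\<exists>j\<in>I. c j \<noteq> 0"
      by (elim exE conjE) (rule that)
    from cj obtain j where j: "j \<in> I" "c j \<noteq> 0" by (elim bexE) (rule that)
    have "(\<Sum>i\<in>I. c i * v i) = c j * v j + (\<Sum>i\<in>I - {j}. c i * v i)"
      using less.prems j by (simp add: sum.remove)
    then have "c j * v j = - (\<Sum>i\<in>I - {j}. c i * v i)" using c(2) by (simp add: add_eq_0_iff)
    then have "inverse (c j) * (c j * v j) = - inverse (c j) * (\<Sum>i\<in>I - {j}. c i * v i)" by simp
    then have "v j = - inverse (c j) * (\<Sum>i\<in>I - {j}. c i * v i)" using j(2)
      by (simp add: mult.assoc[symmetric])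
    then have "v j = (\<Sum>i\<in>I - {j}. (- inverse (c j) * c i) * v i)"
      by (simp add: sum_distrib_left mult.assoc)
    moreover have "\<forall>i\<in>I - {j}. - inverse (c j) * c i \<in> F" using c j by (auto intro!: Fmul Fneg Finv)
    ultimately have "v j \<in> Fspan F v (I - {j})" unfolding Fspan_def
      by (intro CollectI exI[of _ "\<lambda>i. - inverse (c j) * c i"]) simp
    then have sp: "Fspan F v (I - {j}) = Fspan F v I" by (rule span_remove[OF less.prems j(1)])
    have "card (I - {j}) < card I" using less.prems j(1) by (rule card_Diff1_less)
    then obtain B where "B \<subseteq> I - {j}" "Findep F v B" "Fspan F v B = Fspan F v (I - {j})"
      using less.hyps[of "I - {j}"] less.prems by auto
    then show ?thesis using sp by blast
  qed
qed

end


context ctx begin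

definition Lop :: "(nat \<Rightarrow> 'a) \<Rightarrow> 'a \<Rightarrow> 'a" where
  "Lop c x = (\<Sum>i<n. c i * x ^ (q ^ i))"

definition Lset :: "(nat \<Rightarrow> 'a) set" where
  "Lset = {c. \<forall>i<n. c i \<in> F}"

definition Vs :: "'a \<Rightarrow> 'a set" where
  "Vs b = Fspan F (\<lambda>i. b ^ (q ^ i)) {..<n}"

lemma Vs_Lop: "Vs b = {Lop c b | c. c \<in> Lset}"
  unfolding Vs_def Fspan_def Lop_def Lset_def by auto

lemma Lop_add: "Lop c (x + y) = Lop c x + Lop c y"
  unfolding Lop_def by (simp add: frob_add distrib_left sum.distrib)

lemma Lop_zero: "Lop c 0 = 0"
  unfolding Lop_def using q_ge2 by (simp add: power_0_left)

lemma Lop_sum: "Lop c (sum f A) = (\<Sum>a\<in>A. Lop c (f a))"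
  by (induct A rule: infinite_finite_induct) (simp_all add: Lop_zero Lop_add)

lemma Lop_smul: "a \<in> F \<Longrightarrow> Lop c (a * x) = a * Lop c x"
  unfolding Lop_def by (simp add: power_mult_distrib F_pow_pow sum_distrib_left mult_ac)

lemma Lop_neg: "Lop c (- x) = - Lop c x"
  using Lop_add[of c x "-x"] by (simp add: Lop_zero add_eq_0_iff)

lemma Lop_plus_fun: "Lop (\<lambda>i. c i + d i) x = Lop c x + Lop d x"
  unfolding Lop_def by (simp add: distrib_right sum.distrib)

lemma Lop_double:
  assumes "d \<in> Lset"
  shows "Lop c (Lop d x) = (\<Sum>i<n. \<Sum>j<n. c i * d j * x ^ (q ^ (i + j)))"
proof -
  have "Lop c (Lop d x) = (\<Sum>i<n. c i * (\<Sum>j<n. d j * x ^ (q ^ j)) ^ (q ^ i))"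
    unfolding Lop_def ..
  also have "\<dots> = (\<Sum>i<n. \<Sum>j<n. c i * d j * x ^ (q ^ (i + j)))"
  proof (rule sum.cong[OF refl])
    fix i assume "i \<in> {..<n}"
    have "(\<Sum>j<n. d j * x ^ (q ^ j)) ^ (q ^ i) = (\<Sum>j<n. (d j * x ^ (q ^ j)) ^ (q ^ i))"
      by (rule frob_sum)
    also have "\<dots> = (\<Sum>j<n. d j * x ^ (q ^ (i + j)))"
    proof (rule sum.cong[OF refl])
      fix j assume "j \<in> {..<n}"
      then have "d j \<in> F" using assms unfolding Lset_def by auto
      then have "(d j * x ^ (q ^ j)) ^ (q ^ i) = d j * (x ^ (q ^ j)) ^ (q ^ i)"
        by (simp add: power_mult_distrib F_pow_pow)
      also have "(x ^ (q ^ j)) ^ (q ^ i) = x ^ (q ^ (i + j))"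
        by (simp add: power_mult[symmetric] power_add mult.commute)
      finally show "(d j * x ^ (q ^ j)) ^ (q ^ i) = d j * x ^ (q ^ (i + j))" .
    qed
    finally show "c i * (\<Sum>j<n. d j * x ^ (q ^ j)) ^ (q ^ i) = (\<Sum>j<n. c i * d j * x ^ (q ^ (i + j)))"
      by (simp add: sum_distrib_left mult.assoc)
  qed
  finally show ?thesis .
qed

lemma Lop_comm:
  assumes "c \<in> Lset" "d \<in> Lset"
  shows "Lop c (Lop d x) = Lop d (Lop c x)"
proof -
  have "Lop c (Lop d x) = (\<Sum>i<n. \<Sum>j<n. c i * d j * x ^ (q ^ (i + j)))" by (rule Lop_double[OF assms(2)])
  also have "\<dots> = (\<Sum>j<n. \<Sum>i<n. c i * d j * x ^ (q ^ (i + j)))" by (rule sum.swap)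
  also have "\<dots> = (\<Sum>j<n. \<Sum>i<n. d j * c i * x ^ (q ^ (j + i)))" by (simp add: mult_ac add.commute)
  also have "\<dots> = Lop d (Lop c x)" by (rule Lop_double[OF assms(1), symmetric])
  finally show ?thesis .
qed

lemma Vs_closed:
  assumes c: "c \<in> Lset" and y: "y \<in> Vs b"
  shows "Lop c y \<in> Vs b"
proof -
  obtain e where e: "e \<in> Lset" "y = Lop e b" using y unfolding Vs_Lop by auto
  have "Lop c y = (\<Sum>i<n. \<Sum>j<n. c i * e j * b ^ (q ^ (i + j)))" unfolding e(2) by (rule Lop_double[OF e(1)])
  also have "\<dots> \<in> Vs b" unfolding Vs_def
  proof (intro span_finsum)
    fix i j assume i: "i \<in> {..<n}" and j: "j \<in> {..<n}"
    have cf: "c i * e j \<in> F" using c e(1) i j unfolding Lset_def by (auto intro!: Fmul)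
    have "b ^ (q ^ (i + j)) = b ^ (q ^ ((i + j) mod n))" by (rule U_pow_mod)
    moreover have "b ^ (q ^ ((i + j) mod n)) \<in> Fspan F (\<lambda>i. b ^ (q ^ i)) {..<n}"
      using span_gen[of "{..<n}" "(i + j) mod n" "\<lambda>i. b ^ (q ^ i)"] npos by simp
    ultimately show "c i * e j * b ^ (q ^ (i + j)) \<in> Fspan F (\<lambda>i. b ^ (q ^ i)) {..<n}"
      using span_smul[OF cf] by (simp add: mult.assoc)
  qed simp_all
  finally show ?thesis .
qed

definition dlt :: "nat \<Rightarrow> 'a \<Rightarrow> nat \<Rightarrow> 'a" where
  "dlt k a = (\<lambda>i. if i = k then a else 0)"

lemma dlt_Lset: "k < n \<Longrightarrow> a \<in> F \<Longrightarrow> dlt k a \<in> Lset"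
  unfolding dlt_def Lset_def using F0 by auto

lemma Lop_dlt: "k < n \<Longrightarrow> Lop (dlt k a) x = a * x ^ (q ^ k)"
proof -
  assume k: "k < n"
  have "Lop (dlt k a) x = (\<Sum>i<n. if i = k then a * x ^ (q ^ i) else 0)"
    unfolding Lop_def dlt_def by (rule sum.cong) auto
  also have "\<dots> = a * x ^ (q ^ k)" using k by (simp add: sum.delta)
  finally show ?thesis .
qed

lemma Lop_dlt0: "Lop (dlt 0 a) x = a * x"
  using Lop_dlt[OF npos, of a x] by simp

lemma Vs_self: "b \<in> Vs b"
  using span_gen[of "{..<n}" 0 "\<lambda>i. b ^ (q ^ i)"] npos unfolding Vs_def by simp

lemma Vs_cjg: "k < n \<Longrightarrow> b ^ (q ^ k) \<in> Vs b"
  using span_gen[of "{..<n}" k "\<lambda>i. b ^ (q ^ i)"] unfolding Vs_def by simp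

lemma Vs_add: "x \<in> Vs b \<Longrightarrow> y \<in> Vs b \<Longrightarrow> x + y \<in> Vs b"
  unfolding Vs_def by (rule span_add)
lemma Vs_zero: "0 \<in> Vs b"
  unfolding Vs_def by (rule span_zero)
lemma Vs_neg: "x \<in> Vs b \<Longrightarrow> - x \<in> Vs b"
  unfolding Vs_def by (rule span_neg)
lemma Vs_smul: "a \<in> F \<Longrightarrow> x \<in> Vs b \<Longrightarrow> a * x \<in> Vs b"
  unfolding Vs_def by (rule span_smul)

lemma Vs_sub:
  assumes "y \<in> Vs b" shows "Vs y \<subseteq> Vs b"
  unfolding Vs_def[of y] Vs_def[of b]
proof (rule span_mono)
  fix i assume i: "i \<in> {..<n}"
  have "y ^ (q ^ i) = Lop (dlt i 1) y" using i by (simp add: Lop_dlt)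
  also have "\<dots> \<in> Vs b" using i F1 by (intro Vs_closed dlt_Lset assms) auto
  finally show "y ^ (q ^ i) \<in> Fspan F (\<lambda>i. b ^ (q ^ i)) {..<n}" unfolding Vs_def .
qed simp

lemma card_Vs_kn:
  assumes "k \<le> n" and "card (Vs b) = q ^ (n - k)"
  shows "k_normal F q n k b"
proof -
  obtain B where B: "B \<subseteq> {..<n}" "Findep F (\<lambda>i. b ^ (q ^ i)) B"
      "Fspan F (\<lambda>i. b ^ (q ^ i)) B = Fspan F (\<lambda>i. b ^ (q ^ i)) {..<n}"
    using exists_basis[of "{..<n}" "\<lambda>i. b ^ (q ^ i)"] by auto
  have fB: "finite B" using B(1) finite_subset by blast
  have "q ^ card B = q ^ (n - k)"
    using card_span_indep[OF fB B(2)] B(3) assms(2) unfolding Vs_def by simp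
  then have "card B = n - k" using q_ge2 by (simp add: power_inject_exp)
  then show ?thesis unfolding k_normal_def using assms(1) B by blast
qed

lemma kn_card_Vs:
  assumes "k_normal F q n k b"
  shows "card (Vs b) = q ^ (n - k)"
proof -
  obtain B where B: "B \<subseteq> {..<n}" "card B = n - k" "Findep F (\<lambda>i. b ^ (q ^ i)) B"
      "Fspan F (\<lambda>i. b ^ (q ^ i)) B = Fspan F (\<lambda>i. b ^ (q ^ i)) {..<n}"
    using assms unfolding k_normal_def by blast
  have fB: "finite B" using B(1) finite_subset by blast
  show ?thesis using card_span_indep[OF fB B(3)] B(2) B(4) unfolding Vs_def by simp
qed

end


locale rctx = ctx +
  fixes a0 :: 'a
begin

abbreviation "W \<equiv> Vs a0"

definition rep :: "'a \<Rightarrow> nat \<Rightarrow> 'a" where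
  "rep y = (SOME c. c \<in> Lset \<and> Lop c a0 = y)"

definition mul :: "'a \<Rightarrow> 'a \<Rightarrow> 'a" where
  "mul y z = Lop (rep y) z"

lemma rep_spec: "y \<in> W \<Longrightarrow> rep y \<in> Lset \<and> Lop (rep y) a0 = y"
proof -
  assume "y \<in> W"
  then have "\<exists>c. c \<in> Lset \<and> Lop c a0 = y" unfolding Vs_Lop by auto
  then show ?thesis unfolding rep_def by (rule someI_ex)
qed

lemma key:
  assumes "c \<in> Lset" "d \<in> Lset" "Lop c a0 = Lop d a0" "z \<in> W"
  shows "Lop c z = Lop d z"
proof -
  obtain e where e: "e \<in> Lset" "z = Lop e a0" using assms(4) unfolding Vs_Lop by auto
  have "Lop c z = Lop e (Lop c a0)" unfolding e(2) by (rule Lop_comm[OF assms(1) e(1)])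
  also have "\<dots> = Lop e (Lop d a0)" using assms(3) by simp
  also have "\<dots> = Lop d z" unfolding e(2) by (rule Lop_comm[OF e(1) assms(2)])
  finally show ?thesis .
qed

lemma W_self: "a0 \<in> W" by (rule Vs_self)

lemma mul_closed: "y \<in> W \<Longrightarrow> z \<in> W \<Longrightarrow> mul y z \<in> W"
  unfolding mul_def using rep_spec Vs_closed by blast

lemma mul_comm: "y \<in> W \<Longrightarrow> z \<in> W \<Longrightarrow> mul y z = mul z y"
proof -
  assume y: "y \<in> W" and z: "z \<in> W"
  have "mul y z = Lop (rep y) (Lop (rep z) a0)" unfolding mul_def using rep_spec[OF z] by simp
  also have "\<dots> = Lop (rep z) (Lop (rep y) a0)" using rep_spec[OF y] rep_spec[OF z] by (intro Lop_comm) auto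
  also have "\<dots> = mul z y" unfolding mul_def using rep_spec[OF y] by simp
  finally show ?thesis .
qed

lemma mul_assoc:
  assumes y: "y \<in> W" and z: "z \<in> W" and w: "w \<in> W"
  shows "mul (mul y z) w = mul y (mul z w)"
proof -
  let ?u = "mul y z"
  have u: "?u \<in> W" using mul_closed[OF y z] .
  have e0: "Lop (rep ?u) a0 = ?u" using rep_spec[OF u] by simp
  have e1': "?u = Lop (rep y) (Lop (rep z) a0)" unfolding mul_def using rep_spec[OF z] by simp
  have e1: "Lop (rep ?u) a0 = Lop (rep y) (Lop (rep z) a0)" using e0 e1' by simp
  obtain e where e: "e \<in> Lset" "w = Lop e a0" using w unfolding Vs_Lop by auto
  have ry: "rep y \<in> Lset" and rz: "rep z \<in> Lset" and ru: "rep ?u \<in> Lset"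
    using rep_spec[OF y] rep_spec[OF z] rep_spec[OF u] by auto
  have "mul ?u w = Lop (rep ?u) (Lop e a0)" unfolding mul_def e(2) ..
  also have "\<dots> = Lop e (Lop (rep ?u) a0)" by (rule Lop_comm[OF ru e(1)])
  also have "\<dots> = Lop e (Lop (rep y) (Lop (rep z) a0))" using e1 by simp
  also have "\<dots> = Lop (rep y) (Lop e (Lop (rep z) a0))" by (rule Lop_comm[OF e(1) ry])
  also have "\<dots> = Lop (rep y) (Lop (rep z) (Lop e a0))" by (rule arg_cong[where f="Lop (rep y)"], rule Lop_comm[OF e(1) rz])
  also have "\<dots> = mul y (mul z w)" unfolding mul_def e(2) ..
  finally show ?thesis .
qed

lemma mul_one_right: "y \<in> W \<Longrightarrow> mul y a0 = y"
  using rep_spec[of y] by (simp add: mul_def)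

lemma dlt0_Lset: "a \<in> F \<Longrightarrow> dlt 0 a \<in> Lset"
  by (rule dlt_Lset[OF npos])

lemma mul_scalar:
  assumes a: "a \<in> F" and z: "z \<in> W"
  shows "mul (a * a0) z = a * z"
proof -
  have aw: "a * a0 \<in> W" using Vs_smul[OF a W_self] .
  have "Lop (rep (a * a0)) z = Lop (dlt 0 a) z"
  proof (rule key)
    show "rep (a * a0) \<in> Lset" using rep_spec[OF aw] by simp
    show "dlt 0 a \<in> Lset" by (rule dlt0_Lset[OF a])
    show "Lop (rep (a * a0)) a0 = Lop (dlt 0 a) a0" using rep_spec[OF aw] by (simp add: Lop_dlt0)
  qed (rule z)
  then show ?thesis unfolding mul_def by (simp add: Lop_dlt0)
qed

lemma mul_one: "z \<in> W \<Longrightarrow> mul a0 z = z"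
  using mul_scalar[OF F1] by simp

lemma mul_negone: "z \<in> W \<Longrightarrow> mul (- a0) z = - z"
  using mul_scalar[OF Fneg[OF F1]] by simp

lemma mul_add_right: "mul y (z + w) = mul y z + mul y w"
  unfolding mul_def by (rule Lop_add)

lemma mul_add_left:
  assumes y: "y \<in> W" and z: "z \<in> W" and w: "w \<in> W"
  shows "mul (y + z) w = mul y w + mul z w"
proof -
  have yz: "y + z \<in> W" using Vs_add[OF y z] .
  have ry: "rep y \<in> Lset" and rz: "rep z \<in> Lset" using rep_spec[OF y] rep_spec[OF z] by auto
  have s: "(\<lambda>i. rep y i + rep z i) \<in> Lset" using ry rz unfolding Lset_def by (auto intro!: Fadd)
  have "Lop (rep (y + z)) w = Lop (\<lambda>i. rep y i + rep z i) w"
  proof (rule key)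
    show "rep (y + z) \<in> Lset" using rep_spec[OF yz] by simp
    show "Lop (rep (y + z)) a0 = Lop (\<lambda>i. rep y i + rep z i) a0"
      using rep_spec[OF yz] rep_spec[OF y] rep_spec[OF z] by (simp add: Lop_plus_fun)
  qed (use s w in auto)
  then show ?thesis unfolding mul_def by (simp add: Lop_plus_fun)
qed

lemma mul_zero_right: "mul y 0 = 0"
  unfolding mul_def by (rule Lop_zero)

lemma mul_zero_left: "z \<in> W \<Longrightarrow> mul 0 z = 0"
  using mul_comm[OF Vs_zero, of z] mul_zero_right by simp

lemma mul_neg_right: "mul y (- z) = - mul y z"
  unfolding mul_def by (rule Lop_neg)

definition ideal :: "'a set \<Rightarrow> bool" where
  "ideal I \<longleftrightarrow> I \<subseteq> W \<and> 0 \<in> I \<and> (\<forall>x\<in>I. \<forall>y\<in>I. x + y \<in> I) \<and> (\<forall>x\<in>I. \<forall>y\<in>W. mul y x \<in> I)"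

definition maxi :: "'a set \<Rightarrow> bool" where
  "maxi M \<longleftrightarrow> ideal M \<and> M \<noteq> W \<and> (\<forall>J. ideal J \<longrightarrow> M \<subseteq> J \<longrightarrow> J = M \<or> J = W)"

lemma idealD:
  assumes "ideal I"
  shows "I \<subseteq> W" "0 \<in> I" "x \<in> I \<Longrightarrow> y \<in> I \<Longrightarrow> x + y \<in> I" "x \<in> I \<Longrightarrow> y \<in> W \<Longrightarrow> mul y x \<in> I"
  using assms unfolding ideal_def by blast+

lemma ideal_neg: "ideal I \<Longrightarrow> x \<in> I \<Longrightarrow> - x \<in> I"
proof -
  assume I: "ideal I" and x: "x \<in> I"
  have "x \<in> W" using idealD(1)[OF I] x by blast
  then have "mul (- a0) x = - x" by (rule mul_negone)
  moreover have "mul (- a0) x \<in> I" using idealD(4)[OF I x] Vs_neg[OF W_self] by blast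
  ultimately show ?thesis by simp
qed

lemma ideal_mul_left: "ideal I \<Longrightarrow> x \<in> I \<Longrightarrow> y \<in> W \<Longrightarrow> mul x y \<in> I"
proof -
  assume I: "ideal I" and x: "x \<in> I" and y: "y \<in> W"
  have "x \<in> W" using idealD(1)[OF I] x by blast
  then have "mul x y = mul y x" using y by (rule mul_comm)
  then show ?thesis using idealD(4)[OF I x y] by simp
qed

lemma ideal_W: "ideal W"
  unfolding ideal_def using Vs_zero Vs_add mul_closed by blast

lemma ideal_one: "ideal I \<Longrightarrow> a0 \<in> I \<Longrightarrow> I = W"
proof
  assume I: "ideal I" and a: "a0 \<in> I"
  show "I \<subseteq> W" by (rule idealD(1)[OF I])
  show "W \<subseteq> I"
  proof
    fix y assume y: "y \<in> W"
    have "mul y a0 \<in> I" using idealD(4)[OF I a y] .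
    then show "y \<in> I" using mul_one_right[OF y] by simp
  qed
qed

lemma ideal_Int: "ideal I \<Longrightarrow> ideal J \<Longrightarrow> ideal (I \<inter> J)"
  unfolding ideal_def by blast

lemma ideal_Inter: "(\<And>M. M \<in> T \<Longrightarrow> ideal M) \<Longrightarrow> ideal (W \<inter> \<Inter>T)"
  unfolding ideal_def using Vs_zero Vs_add mul_closed by blast

definition isum :: "'a set \<Rightarrow> 'a set \<Rightarrow> 'a set" where
  "isum I J = {x + y | x y. x \<in> I \<and> y \<in> J}"

lemma ideal_isum:
  assumes I: "ideal I" and J: "ideal J"
  shows "ideal (isum I J)"
  unfolding ideal_def
proof (intro conjI ballI)
  show "isum I J \<subseteq> W" unfolding isum_def using idealD(1)[OF I] idealD(1)[OF J] Vs_add by blast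
  show "0 \<in> isum I J" unfolding isum_def using idealD(2)[OF I] idealD(2)[OF J] by force
next
  fix x y assume "x \<in> isum I J" "y \<in> isum I J"
  then obtain x1 x2 y1 y2 where "x = x1 + x2" "y = y1 + y2" "x1 \<in> I" "x2 \<in> J" "y1 \<in> I" "y2 \<in> J"
    unfolding isum_def by blast
  moreover have "x + y = (x1 + y1) + (x2 + y2)" using calculation by (simp add: ac_simps)
  ultimately show "x + y \<in> isum I J" unfolding isum_def using idealD(3)[OF I] idealD(3)[OF J] by blast
next
  fix x y assume "x \<in> isum I J" "y \<in> W"
  then obtain x1 x2 where "x = x1 + x2" "x1 \<in> I" "x2 \<in> J" unfolding isum_def by blast
  moreover have "mul y x = mul y x1 + mul y x2" using calculation by (simp add: mul_add_right)
  ultimately show "mul y x \<in> isum I J" unfolding isum_def using idealD(4)[OF I] idealD(4)[OF J] \<open>y \<in> W\<close> by blast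
qed

lemma isum_sup1: "ideal J \<Longrightarrow> I \<subseteq> isum I J"
  unfolding isum_def using idealD(2) by force

lemma maxi_comax:
  assumes M: "maxi M" and M': "maxi M'" and ne: "M \<noteq> M'"
  shows "\<exists>a\<in>M'. \<exists>b\<in>M. a + b = a0"
proof -
  have iM: "ideal M" and iM': "ideal M'" using M M' unfolding maxi_def by auto
  have S: "ideal (isum M' M)" by (rule ideal_isum[OF iM' iM])
  have "M \<subseteq> isum M' M" unfolding isum_def using idealD(2)[OF iM'] by force
  then have "isum M' M = M \<or> isum M' M = W" using M S unfolding maxi_def by blast
  moreover have "isum M' M \<noteq> M"
  proof
    assume "isum M' M = M"
    then have "M' \<subseteq> M" using isum_sup1[OF iM, of M'] by simp
    then have "M = M' \<or> M = W" using M' iM unfolding maxi_def by blast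
    then show False using ne M unfolding maxi_def by blast
  qed
  ultimately have "a0 \<in> isum M' M" using W_self by simp
  then show ?thesis unfolding isum_def by blast
qed

lemma comax_Inter:
  assumes fin: "finite T" and T: "\<And>M'. M' \<in> T \<Longrightarrow> maxi M'" and M: "maxi M" and nT: "M \<notin> T"
  shows "\<exists>a\<in>W \<inter> \<Inter>T. \<exists>b\<in>M. a + b = a0"
  using fin T nT
proof (induct T rule: finite_induct)
  case empty
  have "0 \<in> M" using M unfolding maxi_def ideal_def by blast
  then show ?case using W_self by force
next
  case (insert M' T)
  obtain a1 b1 where a1: "a1 \<in> W \<inter> \<Inter>T" and b1: "b1 \<in> M" and ab1: "a1 + b1 = a0"
    using insert by blast
  have MM': "M \<noteq> M'" using insert.prems by auto
  obtain a2 b2 where a2: "a2 \<in> M'" and b2: "b2 \<in> M" and ab2: "a2 + b2 = a0"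
    using maxi_comax[OF M insert.prems(1)[of M'] MM'] by auto
  have iM: "ideal M" and iM': "ideal M'" using M insert.prems(1)[of M'] unfolding maxi_def by auto
  have Ws: "a1 \<in> W" "b1 \<in> W" "a2 \<in> W" "b2 \<in> W"
    using a1 b1 b2 a2 idealD(1)[OF iM] idealD(1)[OF iM'] by auto
  have "a0 = mul a0 a0" using mul_one[OF W_self] by simp
  also have "\<dots> = mul (a1 + b1) (a2 + b2)" using ab1 ab2 by simp
  also have "\<dots> = mul a1 a2 + (mul a1 b2 + mul b1 (a2 + b2))"
    using Ws by (simp add: mul_add_left mul_add_right Vs_add ac_simps)
  finally have eq: "a0 = mul a1 a2 + (mul a1 b2 + mul b1 (a2 + b2))" .
  have "mul a1 a2 \<in> W \<inter> \<Inter>(insert M' T)"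
  proof -
    have "mul a1 a2 \<in> W" using mul_closed Ws by blast
    moreover have "mul a1 a2 \<in> M'" using idealD(4)[OF iM' a2 Ws(1)] .
    moreover have "mul a1 a2 \<in> X" if X: "X \<in> T" for X
    proof -
      have "ideal X" using insert.prems(1) X unfolding maxi_def by blast
      moreover have "a1 \<in> X" using a1 X by blast
      ultimately show ?thesis using ideal_mul_left Ws(3) by blast
    qed
    ultimately show ?thesis by blast
  qed
  moreover have "mul a1 b2 + mul b1 (a2 + b2) \<in> M"
  proof -
    have "mul a1 b2 \<in> M" using idealD(4)[OF iM b2 Ws(1)] .
    moreover have "mul b1 (a2 + b2) \<in> M" using ideal_mul_left[OF iM b1] Ws Vs_add by blast
    ultimately show ?thesis using idealD(3)[OF iM] by blast
  qed
  ultimately show ?case using eq by metis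
qed

end


definition addsub :: "'a::ab_group_add set \<Rightarrow> bool" where
  "addsub U \<longleftrightarrow> 0 \<in> U \<and> (\<forall>x\<in>U. \<forall>y\<in>U. x + y \<in> U) \<and> (\<forall>x\<in>U. - x \<in> U)"

lemma addsub_diff: "addsub U \<Longrightarrow> x \<in> U \<Longrightarrow> y \<in> U \<Longrightarrow> x - y \<in> U"
proof -
  assume U: "addsub U" and x: "x \<in> U" and y: "y \<in> U"
  have "- y \<in> U" using U y unfolding addsub_def by blast
  then have "x + - y \<in> U" using U x unfolding addsub_def by blast
  then show ?thesis by simp
qed

lemma addsub_card:
  fixes I J :: "'a::{ab_group_add,finite} set"
  assumes I: "addsub I" and J: "addsub J" and fI: "finite I" and fJ: "finite J"
  shows "card {x + y | x y. x \<in> I \<and> y \<in> J} * card (I \<inter> J) = card I * card J"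
proof -
  let ?S = "{x + y | x y. x \<in> I \<and> y \<in> J}"
  let ?fib = "\<lambda>s. {p \<in> I \<times> J. fst p + snd p = s}"
  have fS: "finite ?S" by (rule finite_subset[OF subset_UNIV finite_UNIV])
  have U: "I \<times> J = (\<Union>s\<in>?S. ?fib s)"
  proof
    show "I \<times> J \<subseteq> (\<Union>s\<in>?S. ?fib s)"
    proof
      fix p assume p: "p \<in> I \<times> J"
      have "fst p + snd p \<in> ?S" using p by (intro CollectI exI[of _ "fst p"] exI[of _ "snd p"]) auto
      moreover have "p \<in> ?fib (fst p + snd p)" using p by simp
      ultimately show "p \<in> (\<Union>s\<in>?S. ?fib s)" by (rule UN_I)
    qed
    show "(\<Union>s\<in>?S. ?fib s) \<subseteq> I \<times> J" by auto
  qed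
  have fib: "card (?fib s) = card (I \<inter> J)" if s: "s \<in> ?S" for s
  proof -
    obtain a b where ab: "a \<in> I" "b \<in> J" "s = a + b" using s by blast
    have "bij_betw (\<lambda>d. (a + d, b - d)) (I \<inter> J) (?fib s)"
    proof (rule bij_betwI[where g="\<lambda>p. fst p - a"])
      show "(\<lambda>d. (a + d, b - d)) \<in> I \<inter> J \<rightarrow> ?fib s"
      proof
        fix d assume d: "d \<in> I \<inter> J"
        have "a + d \<in> I" using I ab(1) d unfolding addsub_def by blast
        moreover have "b - d \<in> J" using addsub_diff[OF J ab(2)] d by blast
        ultimately show "(a + d, b - d) \<in> ?fib s" using ab(3) by simp
      qed
      show "(\<lambda>p. fst p - a) \<in> ?fib s \<rightarrow> I \<inter> J"
      proof
        fix p assume p: "p \<in> ?fib s"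
        have "fst p - a \<in> I" using addsub_diff[OF I] p ab(1) by auto
        moreover have "fst p - a = b - snd p" using p ab(3) by (auto simp: algebra_simps)
        moreover have "b - snd p \<in> J" using addsub_diff[OF J] p ab(2) by auto
        ultimately show "fst p - a \<in> I \<inter> J" by simp
      qed
    next
      fix d assume "d \<in> I \<inter> J" then show "fst (a + d, b - d) - a = d" by simp
    next
      fix p assume p: "p \<in> ?fib s"
      then have "snd p = b - (fst p - a)" using ab(3) by (auto simp: algebra_simps)
      then show "(a + (fst p - a), b - (fst p - a)) = p" by (simp add: prod_eq_iff)
    qed
    then show ?thesis by (simp add: bij_betw_same_card)
  qed
  have "card I * card J = card (I \<times> J)" by (simp add: card_cartesian_product)
  also have "\<dots> = card (\<Union>s\<in>?S. ?fib s)" by (rule arg_cong[OF U])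
  also have "\<dots> = (\<Sum>s\<in>?S. card (?fib s))"
  proof (rule card_UN_disjoint[OF fS])
    show "\<forall>s\<in>?S. finite (?fib s)" using fI fJ by auto
    show "\<forall>s\<in>?S. \<forall>t\<in>?S. s \<noteq> t \<longrightarrow> ?fib s \<inter> ?fib t = {}" by auto
  qed
  also have "\<dots> = (\<Sum>s\<in>?S. card (I \<inter> J))" by (rule sum.cong[OF refl]) (rule fib)
  also have "\<dots> = card ?S * card (I \<inter> J)" by simp
  finally show ?thesis by simp
qed

context rctx begin

lemma ideal_addsub: "ideal I \<Longrightarrow> addsub I"
  unfolding addsub_def using ideal_neg idealD by blast

lemma isum_eq: "isum I J = {x + y | x y. x \<in> I \<and> y \<in> J}"
  unfolding isum_def ..

lemma crt_card:
  assumes fin: "finite T" and T: "\<And>M. M \<in> T \<Longrightarrow> maxi M"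
  shows "card (W \<inter> \<Inter>T) * card W ^ card T = card W * (\<Prod>M\<in>T. card M)"
  using fin T
proof (induct T rule: finite_induct)
  case empty then show ?case by simp
next
  case (insert M T)
  let ?I = "W \<inter> \<Inter>T"
  have MT: "\<And>X. X \<in> T \<Longrightarrow> maxi X" using insert.prems by blast
  have M: "maxi M" using insert.prems by blast
  have iI: "ideal ?I" by (rule ideal_Inter) (use MT in \<open>auto simp: maxi_def\<close>)
  have iM: "ideal M" using M unfolding maxi_def by blast
  obtain a b where ab: "a \<in> ?I" "b \<in> M" "a + b = a0"
    using comax_Inter[OF insert.hyps(1) MT M insert.hyps(2)] by blast
  have "a0 \<in> isum ?I M" unfolding isum_def using ab by blast
  then have S: "isum ?I M = W" by (rule ideal_one[OF ideal_isum[OF iI iM]])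
  have "card (isum ?I M) * card (?I \<inter> M) = card ?I * card M"
    unfolding isum_eq by (rule addsub_card[OF ideal_addsub[OF iI] ideal_addsub[OF iM]]) simp_all
  then have e: "card W * card (?I \<inter> M) = card ?I * card M" using S by simp
  have eq: "W \<inter> \<Inter>(insert M T) = ?I \<inter> M" by blast
  have "card (W \<inter> \<Inter>(insert M T)) * card W ^ card (insert M T)
      = (card W * card (?I \<inter> M)) * card W ^ card T"
    unfolding eq using insert.hyps by (simp add: mult_ac)
  also have "\<dots> = card M * (card ?I * card W ^ card T)" using e by (simp add: mult_ac)
  also have "\<dots> = card M * (card W * (\<Prod>M\<in>T. card M))" using insert.hyps(3) MT by simp
  also have "\<dots> = card W * (\<Prod>M\<in>insert M T. card M)" using insert.hyps by (simp add: mult_ac)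
  finally show ?case .
qed

lemma maxi_index:
  assumes M: "maxi M"
  shows "q * card M \<le> card W"
proof -
  have iM: "ideal M" and MW: "M \<noteq> W" using M unfolding maxi_def by auto
  have MsW: "M \<subseteq> W" using idealD(1)[OF iM] .
  obtain b where b: "b \<in> W" "b \<notin> M" using MW MsW by blast
  let ?f = "\<lambda>p. fst p * b + snd p"
  have inj: "inj_on ?f (F \<times> M)"
  proof (rule inj_onI)
    fix p p' assume p: "p \<in> F \<times> M" and p': "p' \<in> F \<times> M" and e: "?f p = ?f p'"
    have eq1: "(fst p - fst p') * b = snd p' - snd p" using e by (simp add: algebra_simps)
    have "fst p = fst p'"
    proof (rule ccontr)
      assume ne: "fst p \<noteq> fst p'"
      let ?c = "fst p - fst p'"
      have cF: "?c \<in> F" using p p' by (auto intro!: Fminus)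
      have c0: "?c \<noteq> 0" using ne by simp
      have "snd p' - snd p \<in> M" using addsub_diff[OF ideal_addsub[OF iM]] p p' by auto
      then have cb: "?c * b \<in> M" using eq1 by simp
      have icF: "inverse ?c \<in> F" using Finv[OF cF c0] .
      have "mul (inverse ?c * a0) (?c * b) \<in> M"
        using idealD(4)[OF iM cb] Vs_smul[OF icF W_self] by blast
      moreover have "mul (inverse ?c * a0) (?c * b) = inverse ?c * (?c * b)"
        using mul_scalar[OF icF] Vs_smul[OF cF b(1)] by blast
      moreover have "inverse ?c * (?c * b) = b" using c0 by (simp add: mult.assoc[symmetric])
      ultimately show False using b(2) by simp
    qed
    moreover then have "snd p = snd p'" using e by simp
    ultimately show "p = p'" by (simp add: prod_eq_iff)
  qed
  have img: "?f ` (F \<times> M) \<subseteq> W"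
  proof
    fix x assume "x \<in> ?f ` (F \<times> M)"
    then obtain a m where am: "a \<in> F" "m \<in> M" "x = a * b + m" by auto
    have "a * b \<in> W" using Vs_smul[OF am(1) b(1)] .
    moreover have "m \<in> W" using MsW am(2) by blast
    ultimately show "x \<in> W" using am(3) Vs_add by simp
  qed
  have "card (F \<times> M) \<le> card W" using card_inj_on_le[OF inj img] by simp
  then show ?thesis by (simp add: card_cartesian_product cardF)
qed

lemma exists_maxi:
  "ideal I \<Longrightarrow> I \<noteq> W \<Longrightarrow> \<exists>M. maxi M \<and> I \<subseteq> M"
proof (induct "card W - card I" arbitrary: I rule: less_induct)
  case less
  show ?case
  proof (cases "maxi I")
    case True then show ?thesis by blast
  next
    case False
    then obtain J where J: "ideal J" "I \<subseteq> J" "J \<noteq> I" "J \<noteq> W"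
      using less.prems unfolding maxi_def by blast
    have JW: "J \<subseteq> W" using idealD(1)[OF J(1)] .
    have "I \<subset> J" using J(2,3) by blast
    then have "card I < card J" by (simp add: psubset_card_mono)
    moreover have "card J \<le> card W" by (rule card_mono) (use JW in simp_all)
    ultimately have "card W - card J < card W - card I" by simp
    then obtain M where "maxi M" "J \<subseteq> M" using less.hyps[of J] J(1,4) by blast
    then show ?thesis using J(2) by blast
  qed
qed

lemma nonunit_in_maxi:
  assumes y: "y \<in> W" and nu: "\<forall>z\<in>W. mul z y \<noteq> a0"
  shows "\<exists>M. maxi M \<and> y \<in> M"
proof -
  let ?P = "{mul z y | z. z \<in> W}"
  have iP: "ideal ?P" unfolding ideal_def
  proof (intro conjI ballI)
    show "?P \<subseteq> W" using mul_closed y by blast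
    have "mul 0 y = 0" by (rule mul_zero_left[OF y])
    then show "0 \<in> ?P" using Vs_zero by force
  next
    fix u v assume "u \<in> ?P" "v \<in> ?P"
    then obtain z z' where z: "z \<in> W" "u = mul z y" and z': "z' \<in> W" "v = mul z' y" by blast
    have "u + v = mul (z + z') y" using mul_add_left[OF z(1) z'(1) y] z z' by simp
    then show "u + v \<in> ?P" using Vs_add[OF z(1) z'(1)] by blast
  next
    fix u v assume "u \<in> ?P" "v \<in> W"
    then obtain z where z: "z \<in> W" "u = mul z y" by blast
    have "mul v u = mul (mul v z) y" using mul_assoc[OF \<open>v \<in> W\<close> z(1) y] z(2) by simp
    then show "mul v u \<in> ?P" using mul_closed[OF \<open>v \<in> W\<close> z(1)] by blast
  qed
  have "?P \<noteq> W"
  proof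
    assume "?P = W"
    then have "a0 \<in> ?P" using W_self by simp
    then obtain z where "z \<in> W" "a0 = mul z y" by blast
    then show False using nu by (metis (no_types))
  qed
  then obtain M where M: "maxi M" "?P \<subseteq> M" using exists_maxi[OF iP] by blast
  have "y = mul a0 y" using mul_one[OF y] by simp
  then have "y \<in> ?P" using W_self by blast
  then show ?thesis using M by blast
qed

lemma unit_Vs:
  assumes y: "y \<in> W" and z: "z \<in> W" and u: "mul z y = a0"
  shows "Vs y = W"
proof
  show "Vs y \<subseteq> W" by (rule Vs_sub[OF y])
  have "a0 = Lop (rep z) y" using u unfolding mul_def by simp
  also have "\<dots> \<in> Vs y" using rep_spec[OF z] Vs_self[of y] by (intro Vs_closed) auto
  finally show "W \<subseteq> Vs y" by (rule Vs_sub)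
qed

lemma good_is_kn:
  assumes y: "y \<in> W" and ny: "\<forall>M. maxi M \<longrightarrow> y \<notin> M"
    and kn: "k \<le> n" "card W = q ^ (n - k)"
  shows "k_normal F q n k y"
proof -
  obtain z where z: "z \<in> W" "mul z y = a0" using nonunit_in_maxi[OF y] ny by blast
  have "Vs y = W" by (rule unit_Vs[OF y z])
  then show ?thesis using card_Vs_kn kn by simp
qed

end


context ctx begin

definition mQ :: nat where "mQ = q ^ n - 1"

lemma Q_ge2: "q ^ n \<ge> 2"
proof -
  have "q \<le> q ^ n" using q_ge2 npos by (simp add: self_le_power)
  then show ?thesis using q_ge2 by simp
qed

lemma mQ_pos: "mQ > 0" using Q_ge2 unfolding mQ_def by simp

lemma Q_eq: "q ^ n = Suc mQ" using Q_ge2 unfolding mQ_def by simp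

lemma card_nz: "card (UNIV - {0::'a}) = mQ"
  using cardU unfolding mQ_def by (simp add: card_Diff_singleton)

definition gen :: 'a where
  "gen = (SOME g. g \<noteq> 0 \<and> (\<forall>x. x \<noteq> 0 \<longrightarrow> (\<exists>i::nat. x = g ^ i)))"

lemma gen_spec: "gen \<noteq> 0 \<and> (\<forall>x. x \<noteq> 0 \<longrightarrow> (\<exists>i::nat. x = gen ^ i))"
  unfolding gen_def by (rule someI_ex[OF mult_group_gen])

lemma gen_nz: "gen \<noteq> 0" using gen_spec by blast
lemma gen_all: "x \<noteq> 0 \<Longrightarrow> \<exists>i. x = gen ^ i" using gen_spec by blast

lemma gen_m: "gen ^ mQ = 1"
proof -
  have "gen ^ (q ^ n) = gen" by (rule U_pow)
  then have "gen * gen ^ mQ = gen * 1" using Q_eq by simp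
  then show ?thesis using gen_nz by simp
qed

lemma gen_mod: "gen ^ i = gen ^ (i mod mQ)"
proof -
  have "gen ^ i = gen ^ (i mod mQ + mQ * (i div mQ))" by simp
  also have "\<dots> = gen ^ (i mod mQ) * (gen ^ mQ) ^ (i div mQ)" by (simp only: power_add power_mult)
  finally show ?thesis using gen_m by simp
qed

lemma gen_img: "(\<lambda>i. gen ^ i) ` {..<mQ} = UNIV - {0}"
proof
  show "(\<lambda>i. gen ^ i) ` {..<mQ} \<subseteq> UNIV - {0}" using gen_nz by auto
  show "UNIV - {0} \<subseteq> (\<lambda>i. gen ^ i) ` {..<mQ}"
  proof
    fix x :: 'a assume "x \<in> UNIV - {0}"
    then obtain i where "x = gen ^ i" using gen_all by blast
    then have "x = gen ^ (i mod mQ)" using gen_mod by simp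
    moreover have "i mod mQ \<in> {..<mQ}" using mQ_pos by simp
    ultimately show "x \<in> (\<lambda>i. gen ^ i) ` {..<mQ}" by (rule image_eqI)
  qed
qed

lemma gen_bij: "bij_betw (\<lambda>i. gen ^ i) {..<mQ} (UNIV - {0})"
proof -
  have "inj_on (\<lambda>i. gen ^ i) {..<mQ}"
    using inj_on_iff_eq_card[of "{..<mQ}" "\<lambda>i. gen ^ i"] gen_img card_nz by simp
  then show ?thesis unfolding bij_betw_def using gen_img by simp
qed

lemma gen_inj: "a < mQ \<Longrightarrow> b < mQ \<Longrightarrow> gen ^ a = gen ^ b \<Longrightarrow> a = b"
  using gen_bij unfolding bij_betw_def inj_on_def by blast

lemma gen_eq_iff: "gen ^ a = gen ^ b \<longleftrightarrow> a mod mQ = b mod mQ"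
proof
  assume "gen ^ a = gen ^ b"
  then have "gen ^ (a mod mQ) = gen ^ (b mod mQ)" using gen_mod[of a] gen_mod[of b] by simp
  then show "a mod mQ = b mod mQ" using gen_inj mQ_pos by simp
next
  assume "a mod mQ = b mod mQ"
  then show "gen ^ a = gen ^ b" using gen_mod[of a] gen_mod[of b] by simp
qed

definition dl :: "'a \<Rightarrow> nat" where
  "dl x = (THE i. i < mQ \<and> gen ^ i = x)"

lemma dl: assumes "x \<noteq> 0" shows "dl x < mQ \<and> gen ^ dl x = x"
proof -
  obtain i where "x = gen ^ i" using gen_all assms by blast
  then have ex: "i mod mQ < mQ \<and> gen ^ (i mod mQ) = x" using gen_mod mQ_pos by simp
  have "\<exists>!j. j < mQ \<and> gen ^ j = x"
  proof (rule ex1I[where a="i mod mQ"])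
    show "i mod mQ < mQ \<and> gen ^ (i mod mQ) = x" by (rule ex)
    fix j assume "j < mQ \<and> gen ^ j = x"
    then show "j = i mod mQ" using ex gen_inj by blast
  qed
  then show ?thesis unfolding dl_def by (rule theI')
qed

lemma dl_gen: "dl (gen ^ i) = i mod mQ"
proof -
  have nz: "gen ^ i \<noteq> 0" using gen_nz by simp
  have "gen ^ dl (gen ^ i) = gen ^ i" using dl[OF nz] by blast
  then have "dl (gen ^ i) mod mQ = i mod mQ" using gen_eq_iff by blast
  then show ?thesis using dl[OF nz] by simp
qed

definition om :: complex where "om = cis (2 * pi / real mQ)"

lemma om_pow: "om ^ k = cis (2 * pi * real k / real mQ)"
  unfolding om_def by (simp add: DeMoivre mult.commute)

lemma om_m: "om ^ mQ = 1"
  unfolding om_pow using mQ_pos by (simp add: complex_eq_iff)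

lemma om_mod: "om ^ k = om ^ (k mod mQ)"
proof -
  have "om ^ k = om ^ (k mod mQ + mQ * (k div mQ))" by simp
  also have "\<dots> = om ^ (k mod mQ) * (om ^ mQ) ^ (k div mQ)" by (simp only: power_add power_mult)
  finally show ?thesis using om_m by simp
qed

lemma om_eq1: "om ^ k = 1 \<longleftrightarrow> mQ dvd k"
proof
  assume h: "om ^ k = 1"
  have inj: "inj_on (\<lambda>k. cis (2 * pi * real k / real mQ)) {..<mQ}"
    using bij_betw_roots_unity[OF mQ_pos] unfolding bij_betw_def by blast
  have "cis (2 * pi * real (k mod mQ) / real mQ) = cis (2 * pi * real 0 / real mQ)"
    using h om_mod[of k] unfolding om_pow by simp
  moreover have "k mod mQ \<in> {..<mQ}" using mQ_pos by simp
  moreover have "(0::nat) \<in> {..<mQ}" using mQ_pos by simp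
  ultimately have "k mod mQ = 0" by (rule inj_onD[OF inj])
  then show "mQ dvd k" by (simp add: dvd_eq_mod_eq_0)
next
  assume "mQ dvd k"
  then have "k mod mQ = 0" by (simp add: dvd_eq_mod_eq_0)
  then show "om ^ k = 1" using om_mod[of k] by simp
qed

lemma om_norm: "norm (om ^ k) = 1"
  unfolding om_pow by simp

definition chi :: "nat \<Rightarrow> 'a \<Rightarrow> complex" where
  "chi t x = (if x = 0 then 0 else om ^ (t * dl x))"

lemma chi_zero: "chi t 0 = 0" unfolding chi_def by simp

lemma chi_gen: "chi t (gen ^ i) = om ^ (t * i)"
proof -
  have nz: "gen ^ i \<noteq> 0" using gen_nz by simp
  have "chi t (gen ^ i) = om ^ (t * (i mod mQ))" unfolding chi_def using nz dl_gen by simp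
  also have "\<dots> = om ^ ((t * (i mod mQ)) mod mQ)" by (rule om_mod)
  also have "(t * (i mod mQ)) mod mQ = (t * i) mod mQ" by (simp add: mod_mult_right_eq)
  also have "om ^ ((t * i) mod mQ) = om ^ (t * i)" by (rule om_mod[symmetric])
  finally show ?thesis .
qed

lemma chi_mult:
  assumes "x \<noteq> 0" "y \<noteq> 0" shows "chi t (x * y) = chi t x * chi t y"
proof -
  obtain i where i: "x = gen ^ i" using gen_all[OF assms(1)] by blast
  obtain j where j: "y = gen ^ j" using gen_all[OF assms(2)] by blast
  show ?thesis unfolding i j by (simp add: power_add[symmetric] chi_gen distrib_left)
qed

lemma chi_one: "chi t 1 = 1"
  using chi_gen[of t 0] by simp

lemma chi_norm: "x \<noteq> 0 \<Longrightarrow> norm (chi t x) = 1"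
  unfolding chi_def by (simp add: om_norm)

lemma chi_sq: "x \<noteq> 0 \<Longrightarrow> chi t x * cnj (chi t x) = 1"
proof -
  assume "x \<noteq> 0"
  then have "complex_of_real ((norm (chi t x))\<^sup>2) = 1" using chi_norm by simp
  then show ?thesis by (simp only: complex_norm_square)
qed

lemma chi_cnj: assumes "x \<noteq> 0" shows "cnj (chi t x) = chi t (inverse x)"
proof -
  have ix: "inverse x \<noteq> 0" using assms by simp
  have "chi t x * chi t (inverse x) = 1" using chi_mult[OF assms ix] assms chi_one by simp
  then have "cnj (chi t x) * (chi t x * chi t (inverse x)) = cnj (chi t x)" by simp
  then show ?thesis using chi_sq[OF assms] by (simp add: mult.assoc[symmetric] mult.commute)
qed

lemma chi0: "x \<noteq> 0 \<Longrightarrow> chi 0 x = 1" unfolding chi_def by simp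

lemma sum_chi_nz: "(\<Sum>x\<in>UNIV - {0}. chi t x) = (\<Sum>i<mQ. (om ^ t) ^ i)"
proof -
  have "(\<Sum>x\<in>UNIV - {0}. chi t x) = (\<Sum>i<mQ. chi t (gen ^ i))"
    by (rule sum.reindex_bij_betw[OF gen_bij, symmetric])
  also have "\<dots> = (\<Sum>i<mQ. (om ^ t) ^ i)" by (simp add: chi_gen power_mult)
  finally show ?thesis .
qed

lemma sum_chi_all: "(\<Sum>x\<in>UNIV. chi t x) = (\<Sum>x\<in>UNIV - {0}. chi t x)"
  by (rule sum.mono_neutral_right) (auto simp: chi_zero)

lemma sum_chi: assumes "\<not> mQ dvd t" shows "(\<Sum>x\<in>UNIV. chi t x) = 0"
proof -
  have ne: "om ^ t \<noteq> 1" using om_eq1 assms by simp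
  have "(\<Sum>x\<in>UNIV. chi t x) = (\<Sum>i<mQ. (om ^ t) ^ i)" using sum_chi_all sum_chi_nz by simp
  also have "\<dots> = ((om ^ t) ^ mQ - 1) / (om ^ t - 1)" by (rule geometric_sum[OF ne])
  also have "(om ^ t) ^ mQ = (om ^ mQ) ^ t" by (simp only: power_mult[symmetric] mult.commute)
  finally show ?thesis using om_m by simp
qed

end


context ctx begin

lemma sum_shift: "(\<Sum>a\<in>UNIV. h (x + a)) = (\<Sum>b\<in>UNIV. (h :: 'a \<Rightarrow> complex) b)"
  by (rule sum.reindex_bij_witness[where i="\<lambda>b. b - x" and j="\<lambda>a. x + a"]) simp_all

lemma corr:
  assumes c: "c \<noteq> 0" and t: "\<not> mQ dvd t"
  shows "(\<Sum>a\<in>UNIV. chi t a * cnj (chi t (a + c))) = -1"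
proof -
  let ?A = "UNIV - {0, -c}"
  let ?B = "UNIV - {0, 1::'a}"
  have "(\<Sum>a\<in>UNIV. chi t a * cnj (chi t (a + c))) = (\<Sum>a\<in>?A. chi t a * cnj (chi t (a + c)))"
    by (rule sum.mono_neutral_right) (auto simp: chi_zero)
  also have "\<dots> = (\<Sum>a\<in>?A. chi t (a * inverse (a + c)))"
  proof (rule sum.cong[OF refl])
    fix a assume a: "a \<in> ?A"
    then have a0: "a \<noteq> 0" and ac: "a + c \<noteq> 0" by (auto simp: add_eq_0_iff)
    have iac: "inverse (a + c) \<noteq> 0" using ac by simp
    show "chi t a * cnj (chi t (a + c)) = chi t (a * inverse (a + c))"
      using chi_cnj[OF ac] chi_mult[OF a0 iac] by simp
  qed
  also have "\<dots> = (\<Sum>z\<in>?B. chi t z)"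
  proof (rule sum.reindex_bij_witness[where i="\<lambda>z. c * z / (1 - z)" and j="\<lambda>a. a * inverse (a + c)"])
    fix a assume a: "a \<in> ?A"
    then have a0: "a \<noteq> 0" and ac: "a + c \<noteq> 0" by (auto simp: add_eq_0_iff)
    have X: "1 - a * inverse (a + c) = c / (a + c)" using ac by (simp add: field_simps)
    have X0: "c / (a + c) \<noteq> 0" using ac c by simp
    have "c * (a * inverse (a + c)) = a * (c / (a + c))" by (simp add: field_simps)
    then show "c * (a * inverse (a + c)) / (1 - a * inverse (a + c)) = a"
      unfolding X using X0 by simp
    have "a * inverse (a + c) \<noteq> 1"
    proof
      assume "a * inverse (a + c) = 1"
      then have "a = a + c" using ac by (simp add: field_simps)
      then show False using c by simp
    qed
    then show "a * inverse (a + c) \<in> ?B" using a0 ac by simp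
  next
    fix z assume z: "z \<in> ?B"
    then have z0: "z \<noteq> 0" and z1: "1 - z \<noteq> 0" by auto
    have e: "c * z / (1 - z) + c = c / (1 - z)" using z1 by (simp add: field_simps)
    show "c * z / (1 - z) * inverse (c * z / (1 - z) + c) = z"
      unfolding e using z1 c by (simp add: field_simps)
    have "c * z / (1 - z) \<noteq> 0" using z0 z1 c by simp
    moreover have "c * z / (1 - z) \<noteq> - c"
    proof
      assume "c * z / (1 - z) = - c"
      then have "c * z = - c * (1 - z)" using z1 by (simp add: field_simps)
      then have "c = 0" by (simp add: algebra_simps)
      then show False using c by simp
    qed
    ultimately show "c * z / (1 - z) \<in> ?A" by simp
  qed simp
  also have "\<dots> = (\<Sum>z\<in>UNIV. chi t z) - chi t 0 - chi t 1"
  proof -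
    have "(\<Sum>z\<in>UNIV. chi t z) = (\<Sum>z\<in>?B. chi t z) + (\<Sum>z\<in>{0,1}. chi t z)"
      by (rule sum.subset_diff) simp_all
    then show ?thesis by simp
  qed
  also have "\<dots> = -1" using sum_chi[OF t] by (simp add: chi_zero chi_one)
  finally show ?thesis .
qed

lemma inner_sum:
  assumes t: "\<not> mQ dvd t"
  shows "(\<Sum>a\<in>UNIV. chi t (x + a) * cnj (chi t (y + a))) = (if x = y then of_nat mQ else -1)"
proof (cases "x = y")
  case True
  have "(\<Sum>a\<in>UNIV. chi t (x + a) * cnj (chi t (x + a))) = (\<Sum>b\<in>UNIV. chi t b * cnj (chi t b))"
    by (rule sum_shift)
  also have "\<dots> = (\<Sum>b\<in>UNIV - {0}. chi t b * cnj (chi t b))"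
    by (rule sum.mono_neutral_right) (auto simp: chi_zero)
  also have "\<dots> = (\<Sum>b\<in>UNIV - {0::'a}. (1::complex))" by (intro sum.cong) (auto simp: chi_sq)
  also have "\<dots> = of_nat mQ" using card_nz by simp
  finally show ?thesis using True by simp
next
  case False
  have "(\<Sum>a\<in>UNIV. chi t (x + a) * cnj (chi t (y + a)))
      = (\<Sum>b\<in>UNIV. chi t b * cnj (chi t (b + (y - x))))"
    using sum_shift[of "\<lambda>b. chi t b * cnj (chi t (b + (y - x)))" x] by (simp add: algebra_simps)
  also have "\<dots> = -1" using False t by (intro corr) auto
  finally show ?thesis using False by simp
qed

lemma charsum_bound:
  assumes U: "addsub U" and t: "\<not> mQ dvd t"
  shows "norm (\<Sum>x\<in>U. chi t x) \<le> sqrt (real (q ^ n))"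
proof -
  define f where "f a = (\<Sum>x\<in>U. chi t (x + a))" for a
  have fU: "f a = f 0" if a: "a \<in> U" for a
  proof -
    have "f a = (\<Sum>x\<in>U. chi t x)" unfolding f_def
    proof (rule sum.reindex_bij_witness[where i="\<lambda>y. y - a" and j="\<lambda>x. x + a"])
      fix x assume "x \<in> U" then show "x + a \<in> U" using U a unfolding addsub_def by blast
    next
      fix y assume "y \<in> U" then show "y - a \<in> U" using addsub_diff[OF U] a by blast
    qed simp_all
    then show ?thesis unfolding f_def by simp
  qed
  have z0: "0 \<in> U" using U unfolding addsub_def by blast
  have "U \<noteq> {}" using z0 by blast
  then have cU: "card U \<ge> 1" by (simp add: Suc_le_eq card_gt_0_iff)
  have "(\<Sum>a\<in>UNIV. f a * cnj (f a)) = (\<Sum>a\<in>UNIV. \<Sum>x\<in>U. \<Sum>y\<in>U. chi t (x + a) * cnj (chi t (y + a)))"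
    unfolding f_def by (simp add: sum_product)
  also have "\<dots> = (\<Sum>x\<in>U. \<Sum>a\<in>UNIV. \<Sum>y\<in>U. chi t (x + a) * cnj (chi t (y + a)))"
    by (rule sum.swap)
  also have "\<dots> = (\<Sum>x\<in>U. \<Sum>y\<in>U. \<Sum>a\<in>UNIV. chi t (x + a) * cnj (chi t (y + a)))"
    by (rule sum.cong[OF refl]) (rule sum.swap)
  also have "\<dots> = (\<Sum>x\<in>U. \<Sum>y\<in>U. (if x = y then of_nat mQ else -1))"
    by (simp add: inner_sum[OF t])
  also have "\<dots> = (\<Sum>x\<in>U. of_nat mQ - of_nat (card U - 1))"
  proof (rule sum.cong[OF refl])
    fix x assume x: "x \<in> U"
    have "(\<Sum>y\<in>U. (if x = y then of_nat mQ else -1)) = (\<Sum>y\<in>U. (if y = x then of_nat mQ + 1 else 0) - (1::complex))"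
      by (rule sum.cong[OF refl]) auto
    also have "\<dots> = of_nat mQ + 1 - of_nat (card U)" using x by (simp add: sum_subtractf sum.delta)
    also have "\<dots> = of_nat mQ - of_nat (card U - 1)" using cU by (simp add: of_nat_diff)
    finally show "(\<Sum>y\<in>U. (if x = y then of_nat mQ else -1)) = (of_nat mQ - of_nat (card U - 1) :: complex)" .
  qed
  also have "\<dots> = complex_of_real (real (card U) * (real mQ - real (card U - 1)))"
    by simp
  finally have tot: "(\<Sum>a\<in>UNIV. f a * cnj (f a)) = complex_of_real (real (card U) * (real mQ - real (card U - 1)))" .
  have "complex_of_real (\<Sum>a\<in>UNIV. (norm (f a))\<^sup>2) = (\<Sum>a\<in>UNIV. f a * cnj (f a))"
    by (simp only: of_real_sum complex_norm_square)
  then have tr: "(\<Sum>a\<in>UNIV. (norm (f a))\<^sup>2) = real (card U) * (real mQ - real (card U - 1))"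
    using tot of_real_eq_iff by metis
  have "real (card U) * (norm (f 0))\<^sup>2 = (\<Sum>a\<in>U. (norm (f a))\<^sup>2)" using fU by simp
  also have "\<dots> \<le> (\<Sum>a\<in>UNIV. (norm (f a))\<^sup>2)" by (rule sum_mono2) simp_all
  also have "\<dots> \<le> real (card U) * real (q ^ n)"
    unfolding tr using Q_eq by (intro mult_left_mono) simp_all
  finally have "(norm (f 0))\<^sup>2 \<le> real (q ^ n)" using cU by simp
  then have "norm (f 0) \<le> sqrt (real (q ^ n))" by (rule real_le_rsqrt)
  then show ?thesis unfolding f_def by simp
qed

end


lemma prod_primes_dvd:
  fixes S :: "nat set"
  assumes "finite S" "\<And>p. p \<in> S \<Longrightarrow> prime p" "\<And>p. p \<in> S \<Longrightarrow> p dvd j"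
  shows "\<Prod>S dvd j"
  using assms
proof (induct S rule: finite_induct)
  case empty then show ?case by simp
next
  case (insert p S)
  have "coprime p (\<Prod>S)"
  proof (rule prod_coprime_right)
    fix i assume "i \<in> S"
    then show "coprime p i" using insert by (intro primes_coprime) auto
  qed
  moreover have "\<Prod>S dvd j" using insert by blast
  moreover have "p dvd j" using insert by blast
  ultimately show ?case using insert.hyps by (simp add: divides_mult)
qed

lemma prod_primes_dvd_iff:
  fixes S :: "nat set"
  assumes "finite S" "\<And>p. p \<in> S \<Longrightarrow> prime p"
  shows "\<Prod>S dvd j \<longleftrightarrow> (\<forall>p\<in>S. p dvd j)"
proof
  assume h: "\<Prod>S dvd j"
  show "\<forall>p\<in>S. p dvd j"
  proof
    fix p assume "p \<in> S"
    then have "p dvd \<Prod>S" using dvd_prodI[OF assms(1), of p "\<lambda>x. x"] by simp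
    then show "p dvd j" using h by (rule dvd_trans)
  qed
next
  assume "\<forall>p\<in>S. p dvd j"
  then show "\<Prod>S dvd j" using prod_primes_dvd[OF assms] by blast
qed

lemma mobius_expand:
  fixes P :: "nat set"
  assumes fin: "finite P" and pr: "\<And>p. p \<in> P \<Longrightarrow> prime p"
  shows "(of_bool (\<forall>p\<in>P. \<not> p dvd j) :: 'b::comm_ring_1) =
         (\<Sum>S\<in>Pow P. (-1) ^ card S * of_bool (\<Prod>S dvd j))"
proof -
  have "(of_bool (\<forall>p\<in>P. \<not> p dvd j) :: 'b) = (\<Prod>p\<in>P. (- of_bool (p dvd j)) + 1)"
  proof (cases "\<forall>p\<in>P. \<not> p dvd j")
    case True
    then have "(\<Prod>p\<in>P. (- of_bool (p dvd j)) + (1::'b)) = (\<Prod>p\<in>P. 1)" by (intro prod.cong) auto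
    then show ?thesis using True by simp
  next
    case False
    then obtain p where "p \<in> P" "p dvd j" by blast
    then have "(\<Prod>p\<in>P. (- of_bool (p dvd j)) + (1::'b)) = 0" using fin by (intro prod_zero) auto
    then show ?thesis using False by simp
  qed
  also have "\<dots> = (\<Sum>S\<in>Pow P. (\<Prod>p\<in>S. - of_bool (p dvd j)) * (\<Prod>p\<in>P - S. 1))"
    by (rule prod_add[OF fin])
  also have "\<dots> = (\<Sum>S\<in>Pow P. (-1) ^ card S * of_bool (\<Prod>S dvd j))"
  proof (rule sum.cong[OF refl])
    fix S assume S: "S \<in> Pow P"
    then have fS: "finite S" using fin finite_subset by auto
    have prS: "\<And>p. p \<in> S \<Longrightarrow> prime p" using S pr by auto
    have "(\<Prod>p\<in>S. of_bool (p dvd j) :: 'b) = of_bool (\<forall>p\<in>S. p dvd j)"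
    proof (cases "\<forall>p\<in>S. p dvd j")
      case True
      then have "(\<Prod>p\<in>S. of_bool (p dvd j) :: 'b) = (\<Prod>p\<in>S. 1)" by (intro prod.cong) auto
      then show ?thesis using True by simp
    next
      case False
      then obtain p where "p \<in> S" "\<not> p dvd j" by blast
      then have "(\<Prod>p\<in>S. of_bool (p dvd j) :: 'b) = 0" using fS by (intro prod_zero) auto
      then show ?thesis using False by simp
    qed
    then show "(\<Prod>p\<in>S. - of_bool (p dvd j)) * (\<Prod>p\<in>P - S. 1) = (-1) ^ card S * (of_bool (\<Prod>S dvd j) :: 'b)"
      using prod_primes_dvd_iff[OF fS prS, of j] by (simp add: prod_uminus)
  qed
  finally show ?thesis .
qed

context ctx begin

abbreviation PF :: "nat set" where "PF \<equiv> prime_factors mQ"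

lemma PF_fin: "finite PF" by simp
lemma PF_prime: "p \<in> PF \<Longrightarrow> prime p" by auto
lemma PF_dvd: "p \<in> PF \<Longrightarrow> p dvd mQ" by auto

lemma coprime_iff_pf: "coprime j mQ \<longleftrightarrow> (\<forall>p\<in>PF. \<not> p dvd j)"
proof
  assume c: "coprime j mQ"
  show "\<forall>p\<in>PF. \<not> p dvd j"
  proof (intro ballI notI)
    fix p assume p: "p \<in> PF" "p dvd j"
    have "is_unit p" using coprime_common_divisor[OF c p(2) PF_dvd[OF p(1)]] .
    then show False using PF_prime[OF p(1)] by simp
  qed
next
  assume h: "\<forall>p\<in>PF. \<not> p dvd j"
  show "coprime j mQ"
  proof (rule coprimeI)
    fix c assume c: "c dvd j" "c dvd mQ"
    show "is_unit c"
    proof (rule ccontr)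
      assume "\<not> is_unit c"
      then have "c \<noteq> 1" by simp
      then obtain p where p: "prime p" "p dvd c" using prime_factor_nat by blast
      have "p dvd mQ" using p(2) c(2) by (rule dvd_trans)
      then have "p \<in> PF" using p(1) mQ_pos by (simp add: in_prime_factors_iff)
      moreover have "p dvd j" using p(2) c(1) by (rule dvd_trans)
      ultimately show False using h by blast
    qed
  qed
qed

lemma prim_iff: assumes x: "x \<noteq> 0" shows "primitive_elem x \<longleftrightarrow> coprime (dl x) mQ"
proof -
  define i where "i = dl x"
  have xi: "x = gen ^ i" using dl[OF x] unfolding i_def by simp
  show ?thesis unfolding i_def[symmetric]
  proof
    assume p: "primitive_elem x"
    obtain j where "gen = x ^ j" using p gen_nz unfolding primitive_elem_def by blast
    then have "gen ^ 1 = gen ^ (i * j)" unfolding xi by (simp add: power_mult)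
    then have m: "1 mod mQ = (i * j) mod mQ" using gen_eq_iff by blast
    show "coprime i mQ"
    proof (rule coprimeI)
      fix c assume c: "c dvd i" "c dvd mQ"
      have "c dvd (i * j)" using c(1) by simp
      moreover have "(i * j) = mQ * ((i * j) div mQ) + (i * j) mod mQ" by simp
      ultimately have "c dvd (i * j) mod mQ" using c(2)
        by (metis dvd_add_right_iff dvd_mult2)
      then have "c dvd 1 mod mQ" using m by simp
      moreover have "c dvd mQ" by (rule c(2))
      ultimately have "c dvd 1"
        by (metis mod_mod_trivial dvd_mod_iff)
      then show "is_unit c" by simp
    qed
  next
    assume c: "coprime i mQ"
    show "primitive_elem x" unfolding primitive_elem_def
    proof (intro conjI allI impI)
      show "x \<noteq> 0" by (rule x)
      fix y :: 'a assume y: "y \<noteq> 0"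
      obtain l where l: "y = gen ^ l" using gen_all[OF y] by blast
      show "\<exists>k. y = x ^ k"
      proof (cases "i = 0")
        case True
        then have "mQ = 1" using c by simp
        then have "y = x ^ 0" unfolding l using gen_mod[of l] by simp
        then show ?thesis by blast
      next
        case False
        obtain a b where ab: "i * a = mQ * b + gcd i mQ" using bezout_nat[OF False] by blast
        then have ab1: "i * a = mQ * b + 1" using c by simp
        have "x ^ (a * l) = gen ^ (i * a * l)" unfolding xi by (simp add: power_mult mult.assoc)
        also have "\<dots> = gen ^ l"
        proof -
          have "(i * a * l) mod mQ = (l + mQ * (b * l)) mod mQ" unfolding ab1 by (simp add: algebra_simps)
          also have "\<dots> = l mod mQ" by simp
          finally show ?thesis using gen_eq_iff by blast
        qed
        finally show ?thesis using l by metis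
      qed
    qed
  qed
qed

lemma dvd_indicator:
  assumes d: "d dvd mQ" and j: "True"
  shows "(of_bool (d dvd j) :: complex) = (1 / of_nat d) * (\<Sum>u<d. om ^ ((mQ div d) * u * j))"
proof -
  have d0: "d > 0" using d mQ_pos by (auto intro: dvd_pos_nat)
  define e where "e = mQ div d"
  have me: "mQ = d * e" using d unfolding e_def by simp
  have e0: "e > 0" using me mQ_pos by (cases e) auto
  define z where "z = om ^ (e * j)"
  have sum: "(\<Sum>u<d. om ^ (e * u * j)) = (\<Sum>u<d. z ^ u)"
    unfolding z_def by (intro sum.cong) (auto simp: power_mult[symmetric] mult_ac)
  have "z ^ d = om ^ (mQ * j)" unfolding z_def me by (simp add: power_mult[symmetric] mult_ac)
  also have "\<dots> = 1" by (simp add: power_mult om_m)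
  finally have zd: "z ^ d = 1" .
  have iff: "mQ dvd e * j \<longleftrightarrow> d dvd j"
  proof
    assume "mQ dvd e * j"
    then have "d * e dvd j * e" unfolding me by (simp add: mult.commute)
    then show "d dvd j" using e0 by simp
  next
    assume "d dvd j"
    then have "d * e dvd j * e" by (rule mult_dvd_mono) simp
    then show "mQ dvd e * j" unfolding me by (simp add: mult.commute)
  qed
  show ?thesis
  proof (cases "d dvd j")
    case True
    then have "z = 1" unfolding z_def using om_eq1 iff by simp
    then show ?thesis using True d0 unfolding e_def[symmetric] sum by simp
  next
    case False
    then have z1: "z \<noteq> 1" unfolding z_def using om_eq1 iff by simp
    have "(\<Sum>u<d. z ^ u) = (z ^ d - 1) / (z - 1)" by (rule geometric_sum[OF z1])
    then have "(\<Sum>u<d. z ^ u) = 0" using zd by simp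
    then show ?thesis using False unfolding e_def[symmetric] sum by simp
  qed
qed

lemma chi_om: "x \<noteq> 0 \<Longrightarrow> om ^ (e * u * dl x) = chi (e * u) x"
  unfolding chi_def by simp

definition dS :: "nat set \<Rightarrow> nat" where "dS S = \<Prod>S"

lemma dS_dvd: "S \<subseteq> PF \<Longrightarrow> dS S dvd mQ"
  unfolding dS_def using PF_fin by (intro prod_primes_dvd) (auto intro: finite_subset)

lemma dS_pos: "S \<subseteq> PF \<Longrightarrow> dS S > 0"
  using dS_dvd mQ_pos by (auto intro: dvd_pos_nat)

lemma prim_expand:
  assumes x: "x \<noteq> 0"
  shows "(of_bool (primitive_elem x) :: complex) =
    (\<Sum>S\<in>Pow PF. (-1) ^ card S * ((1 / of_nat (dS S)) * (\<Sum>u<dS S. chi ((mQ div dS S) * u) x)))"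
proof -
  have "(of_bool (primitive_elem x) :: complex) = of_bool (\<forall>p\<in>PF. \<not> p dvd dl x)"
    using prim_iff[OF x] coprime_iff_pf by simp
  also have "\<dots> = (\<Sum>S\<in>Pow PF. (-1) ^ card S * of_bool (\<Prod>S dvd dl x))"
    by (rule mobius_expand) auto
  also have "\<dots> = (\<Sum>S\<in>Pow PF. (-1) ^ card S * ((1 / of_nat (dS S)) * (\<Sum>u<dS S. chi ((mQ div dS S) * u) x)))"
  proof (rule sum.cong[OF refl])
    fix S assume S: "S \<in> Pow PF"
    have "(of_bool (\<Prod>S dvd dl x) :: complex) = (1 / of_nat (dS S)) * (\<Sum>u<dS S. om ^ ((mQ div dS S) * u * dl x))"
      unfolding dS_def[symmetric] using dS_dvd S by (intro dvd_indicator) auto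
    also have "\<dots> = (1 / of_nat (dS S)) * (\<Sum>u<dS S. chi ((mQ div dS S) * u) x)"
      using chi_om[OF x] by simp
    finally show "(-1) ^ card S * (of_bool (\<Prod>S dvd dl x) :: complex) =
       (-1) ^ card S * ((1 / of_nat (dS S)) * (\<Sum>u<dS S. chi ((mQ div dS S) * u) x))" by simp
  qed
  finally show ?thesis .
qed

end


context ctx begin

definition theta :: real where "theta = (\<Prod>p\<in>PF. (1 - 1 / real p))"

lemma theta_sum: "(\<Sum>S\<in>Pow PF. (-1) ^ card S / real (dS S)) = theta"
proof -
  have "theta = (\<Prod>p\<in>PF. (- (1 / real p)) + 1)" unfolding theta_def by simp
  also have "\<dots> = (\<Sum>S\<in>Pow PF. (\<Prod>p\<in>S. - (1 / real p)) * (\<Prod>p\<in>PF - S. 1))"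
    by (rule prod_add) simp
  also have "\<dots> = (\<Sum>S\<in>Pow PF. (-1) ^ card S / real (dS S))"
  proof (rule sum.cong[OF refl])
    fix S assume "S \<in> Pow PF"
    show "(\<Prod>p\<in>S. - (1 / real p)) * (\<Prod>p\<in>PF - S. 1) = (-1) ^ card S / real (dS S)"
      unfolding dS_def by (simp add: prod_uminus prod_dividef of_nat_prod)
  qed
  finally show ?thesis by simp
qed

lemma theta_pos: "theta > 0"
  unfolding theta_def
proof (rule prod_pos)
  fix p assume "p \<in> PF"
  then have "p \<ge> 2" using PF_prime prime_ge_2_nat by blast
  then show "0 < 1 - 1 / real p" by (simp add: field_simps)
qed

lemma cs0: "(\<Sum>x\<in>(U::'a set). chi 0 x) = of_nat (card U) - (if 0 \<in> U then 1 else 0)"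
proof -
  have "(\<Sum>x\<in>U. chi 0 x) = (\<Sum>x\<in>U. 1 - of_bool (x = 0))"
    by (rule sum.cong[OF refl]) (auto simp: chi0 chi_zero)
  also have "\<dots> = of_nat (card U) - (\<Sum>x\<in>U. of_bool (x = 0))" by (simp add: sum_subtractf)
  also have "(\<Sum>x\<in>U. of_bool (x = (0::'a))) = (if 0 \<in> U then 1 else (0::complex))"
    by (simp add: sum.delta' of_bool_def)
  finally show ?thesis .
qed

lemma PC_bound:
  fixes U :: "'a set"
  assumes U: "addsub U"
  shows "\<bar>real (card {x\<in>U. primitive_elem x}) - theta * (real (card U) - 1)\<bar> \<le> 2 ^ card PF * sqrt (real (q ^ n))"
proof -
  let ?c = "\<lambda>S. (-1) ^ card S * (1 / complex_of_nat (dS S))"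
  let ?e = "\<lambda>S. mQ div dS S"
  define cs where "cs t = (\<Sum>x\<in>U. chi t x)" for t
  have z0: "0 \<in> U" using U unfolding addsub_def by blast
  have "complex_of_nat (card {x\<in>U. primitive_elem x}) = (\<Sum>x\<in>U. of_bool (primitive_elem x))"
  proof -
    have "U \<inter> {x. primitive_elem x} = {x\<in>U. primitive_elem x}" by blast
    then show ?thesis using sum_of_bool_eq[of U "primitive_elem"] by simp
  qed
  also have "\<dots> = (\<Sum>x\<in>U. \<Sum>S\<in>Pow PF. ?c S * (\<Sum>u<dS S. chi (?e S * u) x))"
  proof (rule sum.cong[OF refl])
    fix x assume "x \<in> U"
    show "(of_bool (primitive_elem x) :: complex) = (\<Sum>S\<in>Pow PF. ?c S * (\<Sum>u<dS S. chi (?e S * u) x))"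
    proof (cases "x = 0")
      case True
      then show ?thesis by (simp add: chi_zero primitive_elem_def)
    next
      case False
      then show ?thesis using prim_expand[OF False] by (simp add: mult.assoc)
    qed
  qed
  also have "\<dots> = (\<Sum>S\<in>Pow PF. \<Sum>x\<in>U. ?c S * (\<Sum>u<dS S. chi (?e S * u) x))"
    by (rule sum.swap)
  also have "\<dots> = (\<Sum>S\<in>Pow PF. ?c S * (\<Sum>u<dS S. cs (?e S * u)))"
  proof (rule sum.cong[OF refl])
    fix S
    have "(\<Sum>x\<in>U. ?c S * (\<Sum>u<dS S. chi (?e S * u) x)) = ?c S * (\<Sum>x\<in>U. \<Sum>u<dS S. chi (?e S * u) x)"
      by (rule sum_distrib_left[symmetric])
    also have "(\<Sum>x\<in>U. \<Sum>u<dS S. chi (?e S * u) x) = (\<Sum>u<dS S. \<Sum>x\<in>U. chi (?e S * u) x)"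
      by (rule sum.swap)
    finally show "(\<Sum>x\<in>U. ?c S * (\<Sum>u<dS S. chi (?e S * u) x)) = ?c S * (\<Sum>u<dS S. cs (?e S * u))"
      unfolding cs_def .
  qed
  also have "\<dots> = (\<Sum>S\<in>Pow PF. ?c S * (cs 0 + (\<Sum>u\<in>{1..<dS S}. cs (?e S * u))))"
  proof (rule sum.cong[OF refl])
    fix S assume S: "S \<in> Pow PF"
    have d0: "dS S > 0" using dS_pos S by auto
    have "{..<dS S} = insert 0 {1..<dS S}" using d0 by auto
    then have "(\<Sum>u<dS S. cs (?e S * u)) = cs 0 + (\<Sum>u\<in>{1..<dS S}. cs (?e S * u))" by simp
    then show "?c S * (\<Sum>u<dS S. cs (?e S * u)) = ?c S * (cs 0 + (\<Sum>u\<in>{1..<dS S}. cs (?e S * u)))" by simp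
  qed
  also have "\<dots> = (\<Sum>S\<in>Pow PF. ?c S) * cs 0 + (\<Sum>S\<in>Pow PF. ?c S * (\<Sum>u\<in>{1..<dS S}. cs (?e S * u)))"
    by (simp add: distrib_left sum.distrib sum_distrib_right)
  finally have eq: "complex_of_nat (card {x\<in>U. primitive_elem x}) =
     (\<Sum>S\<in>Pow PF. ?c S) * cs 0 + (\<Sum>S\<in>Pow PF. ?c S * (\<Sum>u\<in>{1..<dS S}. cs (?e S * u)))" .
  have th: "(\<Sum>S\<in>Pow PF. ?c S) = complex_of_real theta"
    unfolding theta_sum[symmetric] by (simp add: of_real_sum)
  have c0: "cs 0 = complex_of_real (real (card U) - 1)" unfolding cs_def cs0 using z0 by simp
  let ?err = "(\<Sum>S\<in>Pow PF. ?c S * (\<Sum>u\<in>{1..<dS S}. cs (?e S * u)))"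
  have "norm ?err \<le> (\<Sum>S\<in>Pow PF. norm (?c S * (\<Sum>u\<in>{1..<dS S}. cs (?e S * u))))"
    by (rule norm_sum)
  also have "\<dots> \<le> (\<Sum>S\<in>Pow PF. sqrt (real (q ^ n)))"
  proof (rule sum_mono)
    fix S assume S: "S \<in> Pow PF"
    have d0: "dS S > 0" using dS_pos S by auto
    have dd: "dS S dvd mQ" using dS_dvd S by auto
    define e where "e = mQ div dS S"
    have me: "mQ = dS S * e" using dd unfolding e_def by simp
    have e0: "e > 0" using me mQ_pos by (cases e) auto
    have bnd: "norm (cs (e * u)) \<le> sqrt (real (q ^ n))" if u: "u \<in> {1..<dS S}" for u
    proof -
      have "\<not> mQ dvd e * u"
      proof
        assume "mQ dvd e * u"
        then have "dS S * e dvd u * e" unfolding me by (simp add: mult.commute)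
        then have "dS S dvd u" using e0 by simp
        then show False using u by (auto dest: dvd_imp_le)
      qed
      then show ?thesis unfolding cs_def by (rule charsum_bound[OF U])
    qed
    have "norm (?c S * (\<Sum>u\<in>{1..<dS S}. cs (?e S * u))) = (1 / real (dS S)) * norm (\<Sum>u\<in>{1..<dS S}. cs (e * u))"
      unfolding e_def by (simp add: norm_mult norm_power norm_divide)
    also have "\<dots> \<le> (1 / real (dS S)) * (\<Sum>u\<in>{1..<dS S}. norm (cs (e * u)))"
      by (intro mult_left_mono norm_sum) simp
    also have "\<dots> \<le> (1 / real (dS S)) * (\<Sum>u\<in>{1..<dS S}. sqrt (real (q ^ n)))"
      by (intro mult_left_mono sum_mono bnd) simp_all
    also have "\<dots> = (real (dS S - 1) / real (dS S)) * sqrt (real (q ^ n))" by simp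
    also have "\<dots> \<le> 1 * sqrt (real (q ^ n))"
      using d0 by (intro mult_right_mono) (simp_all add: of_nat_diff)
    finally show "norm (?c S * (\<Sum>u\<in>{1..<dS S}. cs (?e S * u))) \<le> sqrt (real (q ^ n))" by simp
  qed
  also have "\<dots> = 2 ^ card PF * sqrt (real (q ^ n))" by (simp add: card_Pow)
  finally have errb: "norm ?err \<le> 2 ^ card PF * sqrt (real (q ^ n))" .
  have "complex_of_real (real (card {x\<in>U. primitive_elem x}) - theta * (real (card U) - 1)) = ?err"
    using eq th c0 by simp
  then have "\<bar>real (card {x\<in>U. primitive_elem x}) - theta * (real (card U) - 1)\<bar> = norm ?err"
    by (metis norm_of_real)
  then show ?thesis using errb by simp
qed

end


definition gfun :: "nat \<Rightarrow> real" where "gfun p = 32 * real p ^ 4 / (real p - 1) ^ 5"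

lemma gfun_le1:
  assumes p: "p \<ge> 37"
  shows "gfun p \<le> 1"
proof -
  have pp: "real p > 0" using p by simp
  have p1: "real p - 1 > 0" using p by simp
  have r: "(real p - 1) / real p = 1 + (- 1 / real p)" using pp by (simp add: field_simps)
  have b: "((real p - 1) / real p) ^ 4 \<ge> 1 + real 4 * (- 1 / real p)"
    unfolding r by (rule Bernoulli_inequality) (use p in \<open>simp add: field_simps\<close>)
  have c: "1 + real 4 * (- 1 / real p) \<ge> 8 / 9" using p by (simp add: field_simps)
  have bc: "((real p - 1) / real p) ^ 4 \<ge> 8 / 9" using b c by linarith
  have e: "(real p - 1) ^ 4 = ((real p - 1) / real p) ^ 4 * real p ^ 4" using pp by (simp add: power_divide)
  have "(real p - 1) ^ 4 \<ge> 8 / 9 * real p ^ 4" unfolding e by (rule mult_right_mono[OF bc]) simp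
  moreover have "real p - 1 \<ge> 36" using p by simp
  ultimately have "(real p - 1) * (real p - 1) ^ 4 \<ge> 36 * (8 / 9 * real p ^ 4)"
    by (intro mult_mono) simp_all
  then have "32 * real p ^ 4 \<le> (real p - 1) ^ 5" by (simp add: eval_nat_numeral)
  then show ?thesis unfolding gfun_def using p1 by (simp add: divide_le_eq)
qed

lemma gfun_pos: "p \<ge> 2 \<Longrightarrow> gfun p > 0"
  unfolding gfun_def by simp

definition S0 :: "nat set" where "S0 = {2,3,5,7,11,13,17,19,23,29,31}"

lemma small_prime: assumes "prime p" "p < 37" shows "p \<in> S0"
proof -
  have d: "d dvd p \<Longrightarrow> d = 1 \<or> d = p" for d using assms(1) unfolding prime_nat_iff by blast
  have "p > 1" using assms(1) prime_gt_1_nat by blast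
  moreover have "2 dvd p \<longrightarrow> p = 2" using d[of 2] by auto
  moreover have "3 dvd p \<longrightarrow> p = 3" using d[of 3] by auto
  moreover have "5 dvd p \<longrightarrow> p = 5" using d[of 5] by auto
  ultimately have "p = 2 \<or> p = 3 \<or> p = 5 \<or> p = 7 \<or> p = 11 \<or> p = 13 \<or> p = 17 \<or> p = 19 \<or> p = 23 \<or> p = 29 \<or> p = 31"
    using assms(2) by presburger
  then show ?thesis unfolding S0_def by auto
qed

lemma prodS0: "(\<Prod>p\<in>S0. gfun p) \<le> 2 ^ 32"
  unfolding S0_def gfun_def by simp

lemma gfun_S0_ge1: "p \<in> S0 \<Longrightarrow> gfun p \<ge> 1"
  unfolding S0_def gfun_def by auto

lemma prod_g_bound:
  fixes P :: "nat set"
  assumes fin: "finite P" and pr: "\<And>p. p \<in> P \<Longrightarrow> prime p"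
  shows "(\<Prod>p\<in>P. gfun p) \<le> 2 ^ 32"
proof -
  have ge2: "\<And>p. p \<in> P \<Longrightarrow> p \<ge> 2" using pr prime_ge_2_nat by blast
  have "(\<Prod>p\<in>P. gfun p) = (\<Prod>p\<in>P \<inter> S0. gfun p) * (\<Prod>p\<in>P - S0. gfun p)"
    using fin by (metis Diff_Int2 Int_Diff_Un Int_absorb prod.union_disjoint finite_Diff finite_Int
        Diff_disjoint inf_commute)
  also have "\<dots> \<le> (\<Prod>p\<in>P \<inter> S0. gfun p) * 1"
  proof (rule mult_left_mono)
    show "(\<Prod>p\<in>P - S0. gfun p) \<le> 1"
    proof (rule prod_le_1)
      fix p assume p: "p \<in> P - S0"
      have "p \<ge> 37"
      proof (rule ccontr)
        assume "\<not> p \<ge> 37"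
        then have "p \<in> S0" using small_prime pr p by auto
        then show False using p by blast
      qed
      then show "0 \<le> gfun p \<and> gfun p \<le> 1" using gfun_le1 gfun_pos[of p] by auto
    qed
    show "0 \<le> (\<Prod>p\<in>P \<inter> S0. gfun p)" by (rule prod_nonneg) (use ge2 gfun_pos in \<open>auto intro: less_imp_le\<close>)
  qed
  also have "\<dots> \<le> (\<Prod>p\<in>S0. gfun p)"
  proof -
    have fS: "finite S0" unfolding S0_def by simp
    have "(\<Prod>p\<in>S0. gfun p) = (\<Prod>p\<in>P \<inter> S0. gfun p) * (\<Prod>p\<in>S0 - P. gfun p)"
      using fS by (metis Int_commute prod.Int_Diff)
    moreover have "(\<Prod>p\<in>S0 - P. gfun p) \<ge> 1" by (rule prod_ge_1) (use gfun_S0_ge1 in auto)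
    moreover have "(\<Prod>p\<in>P \<inter> S0. gfun p) \<ge> 0" by (rule prod_nonneg) (use gfun_S0_ge1 in \<open>auto intro: order_trans[OF zero_le_one]\<close>)
    ultimately show ?thesis by (simp add: mult_le_cancel_left1)
  qed
  also have "\<dots> \<le> 2 ^ 32" by (rule prodS0)
  finally show ?thesis .
qed

context ctx begin

lemma X_bound: "(2 ^ card PF / theta) ^ 5 \<le> 2 ^ 32 * real mQ"
proof -
  have p2: "\<And>p. p \<in> PF \<Longrightarrow> real p \<ge> 2" using PF_prime prime_ge_2_nat by fastforce
  have "2 ^ card PF / theta = (\<Prod>p\<in>PF. 2 / (1 - 1 / real p))"
    unfolding theta_def by (simp add: prod_dividef)
  then have "(2 ^ card PF / theta) ^ 5 = (\<Prod>p\<in>PF. (2 / (1 - 1 / real p)) ^ 5)"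
    by (simp add: prod_power_distrib)
  also have "\<dots> = (\<Prod>p\<in>PF. gfun p * real p)"
  proof (rule prod.cong[OF refl])
    fix p assume "p \<in> PF"
    then have "real p \<ge> 2" by (rule p2)
    then show "(2 / (1 - 1 / real p)) ^ 5 = gfun p * real p"
      unfolding gfun_def by (simp add: field_simps power_divide eval_nat_numeral)
  qed
  also have "\<dots> = (\<Prod>p\<in>PF. gfun p) * real (\<Prod>PF)" by (simp add: prod.distrib of_nat_prod)
  also have "\<dots> \<le> 2 ^ 32 * real mQ"
  proof (rule mult_mono)
    show "(\<Prod>p\<in>PF. gfun p) \<le> 2 ^ 32" by (rule prod_g_bound) auto
    have "\<Prod>PF dvd mQ" by (rule prod_primes_dvd) auto
    then have "\<Prod>PF \<le> mQ" using mQ_pos by (rule dvd_imp_le)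
    then show "real (\<Prod>PF) \<le> real mQ" by (simp only: of_nat_le_iff)
  qed (simp_all add: prod_nonneg)
  finally show ?thesis .
qed

end

lemma base_num: "(300::nat) ^ 35 \<ge> 2 ^ 57 * 301 ^ 28"
  by simp

lemma mono_q:
  fixes q :: nat
  assumes "q \<ge> 301"
  shows "(q - 1) ^ 35 \<ge> 2 ^ 57 * q ^ 28"
proof -
  have a: "(q - 1) * 301 \<ge> 300 * q" using assms by simp
  have "((q - 1) * 301) ^ 28 \<ge> (300 * q) ^ 28" using a by (rule power_mono) simp
  moreover have "(q - 1) ^ 7 \<ge> 300 ^ 7" using assms by (intro power_mono) simp_all
  ultimately have "((q - 1) * 301) ^ 28 * (q - 1) ^ 7 \<ge> (300 * q) ^ 28 * 300 ^ 7"
    by (rule mult_mono) simp_all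
  then have "(q - 1) ^ 35 * 301 ^ 28 \<ge> 300 ^ 35 * q ^ 28"
    by (simp add: power_mult_distrib power_add[symmetric] mult_ac)
  moreover have "300 ^ 35 * q ^ 28 \<ge> 2 ^ 57 * 301 ^ 28 * q ^ 28"
    using base_num by simp
  ultimately have "(q - 1) ^ 35 * 301 ^ 28 \<ge> 2 ^ 57 * q ^ 28 * 301 ^ 28" by (simp add: mult_ac)
  then show ?thesis by simp
qed

lemma final_ineq:
  fixes q n s r w :: nat and th m :: real
  assumes q: "q \<ge> 301" and n: "n \<ge> 16" and s: "8 * s \<ge> 7 * n" and rs: "r \<le> s"
    and th: "th > 0" and X: "(2 ^ w / th) ^ 5 \<le> 2 ^ 32 * m" and m: "m < real q ^ n"
  shows "th * real q ^ s * (1 - 1 / real q) ^ r > 2 ^ r * 2 ^ w * sqrt (real q ^ n)"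
proof -
  define B where "B = (real q - 1) / 2"
  have B1: "B \<ge> 1" unfolding B_def using q by simp
  have qpos: "real q > 0" using q by simp
  have "((q - 1) ^ 35) ^ n \<ge> (2 ^ 57 * q ^ 28) ^ n" using mono_q[OF q] by (rule power_mono) simp
  then have "real (((q - 1) ^ 35) ^ n) \<ge> real ((2 ^ 57 * q ^ 28) ^ n)" by (simp only: of_nat_le_iff)
  then have s1: "(real q - 1) ^ (35 * n) \<ge> 2 ^ (57 * n) * real q ^ (28 * n)"
    using q by (simp add: of_nat_diff power_mult power_mult_distrib)
  have e57: "(2::real) ^ (57 * n) = 2 ^ (35 * n) * 2 ^ (22 * n)" by (simp add: power_add[symmetric])
  have g22: "(2::real) ^ (22 * n) \<ge> 2 ^ 256" using n by (intro power_increasing) simp_all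
  have A: "2 ^ (35 * n) * (2 ^ 256 * real q ^ (28 * n)) \<le> 2 ^ (35 * n) * (2 ^ (22 * n) * real q ^ (28 * n))"
    by (intro mult_left_mono mult_right_mono g22) simp_all
  have "(real q - 1) ^ (35 * n) \<ge> 2 ^ (35 * n) * (2 ^ (22 * n) * real q ^ (28 * n))"
    using s1 unfolding e57 by (simp only: mult.assoc)
  then have "(real q - 1) ^ (35 * n) \<ge> 2 ^ (35 * n) * (2 ^ 256 * real q ^ (28 * n))"
    using A by (rule order_trans[rotated])
  then have st1: "B ^ (35 * n) \<ge> 2 ^ 256 * real q ^ (28 * n)"
    unfolding B_def by (simp add: power_divide field_simps)
  have "B ^ (40 * s) \<ge> B ^ (35 * n)" using B1 s by (intro power_increasing) simp_all
  then have "(B ^ (10 * s)) ^ 4 \<ge> (2 ^ 64 * real q ^ (7 * n)) ^ 4"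
    using st1 by (simp add: power_mult[symmetric] power_mult_distrib mult_ac)
  moreover have "0 \<le> B ^ (10 * s)" using B1 by simp
  moreover have "0 \<le> (2::real) ^ 64 * real q ^ (7 * n)" by simp
  ultimately have st3: "B ^ (10 * s) \<ge> 2 ^ 64 * real q ^ (7 * n)"
    using power_mono_iff[of "2 ^ 64 * real q ^ (7 * n)" "B ^ (10 * s)" 4] by simp
  define X where "X = 2 ^ w / th"
  have X0: "X > 0" unfolding X_def using th by simp
  have "X ^ 5 < 2 ^ 32 * real q ^ n" using X m unfolding X_def by simp
  then have "(X ^ 5) ^ 2 < (2 ^ 32 * real q ^ n) ^ 2" using X0 by (intro power_strict_mono) simp_all
  then have x10: "X ^ 10 < 2 ^ 64 * real q ^ (2 * n)" by (simp add: power_mult[symmetric] power_mult_distrib mult.commute)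
  have sq: "sqrt (real q ^ n) ^ 10 = real q ^ (5 * n)"
  proof -
    have e1: "sqrt (real q ^ n) ^ 10 = (sqrt (real q ^ n) ^ 2) ^ 5"
      using power_mult[of "sqrt (real q ^ n)" 2 5] by simp
    have e2: "real q ^ (5 * n) = (real q ^ n) ^ 5" using power_mult[of "real q" n 5] by (simp add: mult.commute)
    show ?thesis using e1 e2 qpos by simp
  qed
  have "(X * sqrt (real q ^ n)) ^ 10 = X ^ 10 * real q ^ (5 * n)" using sq by (simp add: power_mult_distrib)
  also have "\<dots> < 2 ^ 64 * real q ^ (2 * n) * real q ^ (5 * n)" using x10 qpos by simp
  also have "\<dots> = 2 ^ 64 * real q ^ (7 * n)" by (simp add: power_add[symmetric])
  also have "\<dots> \<le> B ^ (10 * s)" by (rule st3)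
  also have "\<dots> = (B ^ s) ^ 10" by (simp add: power_mult[symmetric] mult.commute)
  finally have st5: "X * sqrt (real q ^ n) < B ^ s"
    by (rule power_less_imp_less_base) (use B1 in simp)
  define a where "a = (1 - 1 / real q) / 2"
  have a0: "a \<ge> 0" and a1: "a \<le> 1" unfolding a_def using q by (simp_all add: field_simps)
  have "a ^ r \<ge> a ^ s" by (rule power_decreasing[OF rs a0 a1])
  have "(1 - 1 / real q) ^ r = 2 ^ r * a ^ r" unfolding a_def by (simp add: power_divide)
  then have "th * real q ^ s * (1 - 1 / real q) ^ r = 2 ^ r * (th * (real q ^ s * a ^ r))" by simp
  also have "\<dots> \<ge> 2 ^ r * (th * (real q ^ s * a ^ s))"
    using \<open>a ^ r \<ge> a ^ s\<close> th by (intro mult_left_mono) simp_all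
  also have "real q ^ s * a ^ s = B ^ s"
  proof -
    have qa: "real q * a = B" unfolding a_def B_def using qpos by (simp add: field_simps)
    show ?thesis by (simp only: power_mult_distrib[symmetric] qa)
  qed
  finally have l: "th * real q ^ s * (1 - 1 / real q) ^ r \<ge> 2 ^ r * (th * B ^ s)" .
  have "2 ^ r * 2 ^ w * sqrt (real q ^ n) = 2 ^ r * (th * (X * sqrt (real q ^ n)))"
    unfolding X_def using th by simp
  also have "\<dots> < 2 ^ r * (th * B ^ s)" using st5 th by simp
  finally have "2 ^ r * 2 ^ w * sqrt (real q ^ n) < 2 ^ r * (th * B ^ s)" .
  then show ?thesis using l by linarith
qed



lemma incl_excl_bool:
  assumes fin: "finite A"
  shows "(of_bool (\<forall>a\<in>A. \<not> P a) :: real) = (\<Sum>T\<in>Pow A. (-1) ^ card T * of_bool (\<forall>a\<in>T. P a))"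
proof -
  have "(of_bool (\<forall>a\<in>A. \<not> P a) :: real) = (\<Prod>a\<in>A. (- of_bool (P a)) + 1)"
  proof (cases "\<forall>a\<in>A. \<not> P a")
    case True
    then have "(\<Prod>a\<in>A. (- of_bool (P a)) + (1::real)) = (\<Prod>a\<in>A. 1)" by (intro prod.cong) auto
    then show ?thesis using True by simp
  next
    case False
    then obtain a where "a \<in> A" "P a" by blast
    then have "(\<Prod>a\<in>A. (- of_bool (P a)) + (1::real)) = 0" using fin by (intro prod_zero) auto
    then show ?thesis using False by simp
  qed
  also have "\<dots> = (\<Sum>T\<in>Pow A. (\<Prod>a\<in>T. - of_bool (P a)) * (\<Prod>a\<in>A - T. 1))"
    by (rule prod_add[OF fin])
  also have "\<dots> = (\<Sum>T\<in>Pow A. (-1) ^ card T * of_bool (\<forall>a\<in>T. P a))"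
  proof (rule sum.cong[OF refl])
    fix T assume T: "T \<in> Pow A"
    then have fT: "finite T" using fin finite_subset by auto
    have "(\<Prod>a\<in>T. of_bool (P a) :: real) = of_bool (\<forall>a\<in>T. P a)"
    proof (cases "\<forall>a\<in>T. P a")
      case True
      then have "(\<Prod>a\<in>T. of_bool (P a) :: real) = (\<Prod>a\<in>T. 1)" by (intro prod.cong) auto
      then show ?thesis using True by simp
    next
      case False
      then obtain a where "a \<in> T" "\<not> P a" by blast
      then have "(\<Prod>a\<in>T. of_bool (P a) :: real) = 0" using fT by (intro prod_zero) auto
      then show ?thesis using False by simp
    qed
    then show "(\<Prod>a\<in>T. - of_bool (P a)) * (\<Prod>a\<in>A - T. 1) = (-1) ^ card T * (of_bool (\<forall>a\<in>T. P a) :: real)"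
      by (simp add: prod_uminus)
  qed
  finally show ?thesis .
qed

lemma sum_pow_minus_one:
  assumes "finite A" "A \<noteq> {}"
  shows "(\<Sum>T\<in>Pow A. (-1::real) ^ card T) = 0"
proof -
  have "(\<Prod>a\<in>A. (-1::real) + 1) = (\<Sum>T\<in>Pow A. (\<Prod>a\<in>T. -1) * (\<Prod>a\<in>A - T. 1))"
    by (rule prod_add[OF assms(1)])
  moreover have "(\<Prod>a\<in>A. (-1::real) + 1) = 0" using assms by (simp add: card_gt_0_iff)
  ultimately show ?thesis by simp
qed

context rctx begin

lemma exists_good:
  assumes kn0: "k_normal F q n k a0" and q: "q \<ge> 301" and n16: "n \<ge> 16" and k8: "8 * k \<le> n"
  shows "\<exists>x. k_normal F q n k x \<and> primitive_elem x"
proof -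
  have kn: "k \<le> n" using kn0 unfolding k_normal_def by blast
  define s where "s = n - k"
  have cW: "card W = q ^ s" unfolding s_def by (rule kn_card_Vs[OF kn0])
  have s1: "s \<ge> 1" unfolding s_def using k8 n16 by simp
  have s8: "8 * s \<ge> 7 * n" unfolding s_def using k8 by simp
  have cW2: "card W \<ge> 2"
  proof -
    have "q ^ 1 \<le> q ^ s" using s1 q by (intro power_increasing) simp_all
    then show ?thesis using cW q by simp
  qed
  have cWpos: "card W > 0" using cW2 by simp
  define MM where "MM = {M. maxi M}"
  have MMsub: "MM \<subseteq> Pow W"
  proof
    fix M assume "M \<in> MM"
    then have "ideal M" unfolding MM_def maxi_def by simp
    then show "M \<in> Pow W" using idealD(1) by simp
  qed
  have finMM: "finite MM" using MMsub by (rule finite_subset) simp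
  define r where "r = card MM"
  have MMmaxi: "\<And>M. M \<in> MM \<Longrightarrow> maxi M" unfolding MM_def by simp
  have MMne: "MM \<noteq> {}"
  proof -
    have i0: "ideal {0}" unfolding ideal_def by (simp add: Vs_zero mul_zero_right)
    have "{0} \<noteq> W"
    proof
      assume "{0} = W" then have "card W = card {0::'a}" by simp
      then have "card W = 1" by simp
      then show False using cW2 by simp
    qed
    then obtain M where "maxi M" using exists_maxi[OF i0] by blast
    then show ?thesis unfolding MM_def by blast
  qed
  have idx: "\<And>M. M \<in> MM \<Longrightarrow> q * card M \<le> card W" by (rule maxi_index[OF MMmaxi])
  have crt: "\<And>T. T \<subseteq> MM \<Longrightarrow> real (card (W \<inter> \<Inter>T)) = real (card W) * (\<Prod>M\<in>T. real (card M) / real (card W))"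
  proof -
    fix T assume T: "T \<subseteq> MM"
    have fT: "finite T" using finMM T finite_subset by auto
    have "card (W \<inter> \<Inter>T) * card W ^ card T = card W * (\<Prod>M\<in>T. card M)"
      by (rule crt_card[OF fT]) (use T MMmaxi in blast)
    then have A: "real (card (W \<inter> \<Inter>T)) * real (card W) ^ card T = real (card W) * (\<Prod>M\<in>T. real (card M))"
      by (metis of_nat_mult of_nat_power of_nat_prod)
    have B: "(\<Prod>M\<in>T. real (card M) / real (card W)) = (\<Prod>M\<in>T. real (card M)) / real (card W) ^ card T"
    proof -
      have Wne: "W \<noteq> {}" using W_self by blast
      show ?thesis using Wne by (simp add: prod_dividef)
    qed
    have cWr: "real (card W) \<noteq> 0" using cWpos by (simp only: of_nat_0_less_iff of_nat_eq_0_iff)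
    have pos: "real (card W) ^ card T \<noteq> 0" using cWr by simp
    have "real (card (W \<inter> \<Inter>T)) = real (card W) * (\<Prod>M\<in>T. real (card M)) / real (card W) ^ card T"
      using A pos by (simp add: eq_divide_eq)
    then show "real (card (W \<inter> \<Inter>T)) = real (card W) * (\<Prod>M\<in>T. real (card M) / real (card W))"
      unfolding B by simp
  qed
  have rs: "r \<le> s"
  proof -
    have z: "0 \<in> W \<inter> \<Inter>MM" using MMmaxi Vs_zero unfolding maxi_def ideal_def by blast
    have c1: "real (card (W \<inter> \<Inter>MM)) \<ge> 1"
    proof -
      have "card (W \<inter> \<Inter>MM) > 0" using z by (auto simp: card_gt_0_iff)
      then show ?thesis by simp
    qed
    have "(\<Prod>M\<in>MM. real (card M) / real (card W)) \<le> (\<Prod>M\<in>MM. 1 / real q)"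
    proof (rule prod_mono)
      fix M assume M: "M \<in> MM"
      have "real q * real (card M) \<le> real (card W)" using idx[OF M] by (simp only: of_nat_mult[symmetric] of_nat_le_iff)
      then show "0 \<le> real (card M) / real (card W) \<and> real (card M) / real (card W) \<le> 1 / real q"
        using cWpos q by (simp add: field_simps)
    qed
    then have "1 \<le> real (card W) * (1 / real q) ^ r"
      using crt[of MM] c1 cWpos unfolding r_def by (simp add: mult_left_mono order_trans)
    then have "real q ^ r \<le> real (card W)" using q by (simp add: field_simps power_divide)
    then have "q ^ r \<le> q ^ s" unfolding cW by (simp only: of_nat_power[symmetric] of_nat_le_iff)
    then show ?thesis using q by (simp add: power_le_imp_le_exp)
  qed
  define G where "G = (\<Sum>T\<in>Pow MM. (-1) ^ card T * real (card (W \<inter> \<Inter>T)))"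
  have G_eq: "G = real (card W) * (\<Prod>M\<in>MM. (- (real (card M) / real (card W))) + 1)"
  proof -
    have "(\<Prod>M\<in>MM. (- (real (card M) / real (card W))) + 1) =
        (\<Sum>T\<in>Pow MM. (\<Prod>M\<in>T. - (real (card M) / real (card W))) * (\<Prod>M\<in>MM - T. 1))"
      by (rule prod_add[OF finMM])
    also have "\<dots> = (\<Sum>T\<in>Pow MM. (-1) ^ card T * (\<Prod>M\<in>T. real (card M) / real (card W)))"
      by (simp add: prod_uminus)
    finally have "real (card W) * (\<Prod>M\<in>MM. (- (real (card M) / real (card W))) + 1)
       = (\<Sum>T\<in>Pow MM. (-1) ^ card T * (real (card W) * (\<Prod>M\<in>T. real (card M) / real (card W))))"
      by (simp add: sum_distrib_left mult_ac)
    also have "\<dots> = G" unfolding G_def by (rule sum.cong[OF refl]) (simp add: crt)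
    finally show ?thesis by simp
  qed
  have G_ge: "G \<ge> real (card W) * (1 - 1 / real q) ^ r"
  proof -
    have "(\<Prod>M\<in>MM. (1 - 1 / real q)) \<le> (\<Prod>M\<in>MM. (- (real (card M) / real (card W))) + 1)"
    proof (rule prod_mono)
      fix M assume M: "M \<in> MM"
      have "real q * real (card M) \<le> real (card W)" using idx[OF M] by (simp only: of_nat_mult[symmetric] of_nat_le_iff)
      then have "real (card M) / real (card W) \<le> 1 / real q" using cWpos q by (simp add: field_simps)
      then show "0 \<le> 1 - 1 / real q \<and> 1 - 1 / real q \<le> - (real (card M) / real (card W)) + 1"
        using q by simp
    qed
    then show ?thesis unfolding G_eq r_def using cWpos by (simp add: mult_left_mono)
  qed
  define Gd where "Gd = {x\<in>W. primitive_elem x \<and> (\<forall>M\<in>MM. x \<notin> M)}"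
  define E where "E = 2 ^ card PF * sqrt (real (q ^ n))"
  define e where "e T = real (card {x \<in> W \<inter> \<Inter>T. primitive_elem x}) - theta * (real (card (W \<inter> \<Inter>T)) - 1)" for T
  have eb: "\<And>T. T \<subseteq> MM \<Longrightarrow> \<bar>e T\<bar> \<le> E"
  proof -
    fix T assume T: "T \<subseteq> MM"
    have "ideal (W \<inter> \<Inter>T)" by (rule ideal_Inter) (use T MMmaxi in \<open>auto simp: maxi_def\<close>)
    then have "addsub (W \<inter> \<Inter>T)" by (rule ideal_addsub)
    then show "\<bar>e T\<bar> \<le> E" unfolding e_def E_def by (rule PC_bound)
  qed
  have "real (card Gd) = (\<Sum>x\<in>W. of_bool (primitive_elem x) * of_bool (\<forall>M\<in>MM. \<not> x \<in> M))"
  proof -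
    have "W \<inter> {x. primitive_elem x \<and> (\<forall>M\<in>MM. x \<notin> M)} = Gd" unfolding Gd_def by blast
    then have "real (card Gd) = (\<Sum>x\<in>W. of_bool (primitive_elem x \<and> (\<forall>M\<in>MM. x \<notin> M)))"
      using sum_of_bool_eq[of W "\<lambda>x. primitive_elem x \<and> (\<forall>M\<in>MM. x \<notin> M)"] by simp
    also have "\<dots> = (\<Sum>x\<in>W. of_bool (primitive_elem x) * of_bool (\<forall>M\<in>MM. \<not> x \<in> M))"
      by (rule sum.cong[OF refl]) (simp only: of_bool_conj)
    finally show ?thesis .
  qed
  also have "\<dots> = (\<Sum>x\<in>W. \<Sum>T\<in>Pow MM. (-1) ^ card T * of_bool (primitive_elem x \<and> x \<in> W \<inter> \<Inter>T))"
  proof (rule sum.cong[OF refl])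
    fix x assume x: "x \<in> W"
    have "(of_bool (\<forall>M\<in>MM. \<not> x \<in> M) :: real) = (\<Sum>T\<in>Pow MM. (-1) ^ card T * of_bool (\<forall>M\<in>T. x \<in> M))"
      by (rule incl_excl_bool[OF finMM])
    then show "of_bool (primitive_elem x) * of_bool (\<forall>M\<in>MM. \<not> x \<in> M) =
        (\<Sum>T\<in>Pow MM. (-1) ^ card T * (of_bool (primitive_elem x \<and> x \<in> W \<inter> \<Inter>T) :: real))"
      using x by (simp add: sum_distrib_left mult_ac)
  qed
  also have "\<dots> = (\<Sum>T\<in>Pow MM. \<Sum>x\<in>W. (-1) ^ card T * (of_bool (primitive_elem x \<and> x \<in> W \<inter> \<Inter>T) :: real))"
    by (rule sum.swap)
  also have "\<dots> = (\<Sum>T\<in>Pow MM. (-1) ^ card T * (\<Sum>x\<in>W. of_bool (primitive_elem x \<and> x \<in> W \<inter> \<Inter>T)))"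
    by (simp only: sum_distrib_left)
  also have "\<dots> = (\<Sum>T\<in>Pow MM. (-1) ^ card T * real (card {x \<in> W \<inter> \<Inter>T. primitive_elem x}))"
  proof (rule sum.cong[OF refl])
    fix T
    have e2: "W \<inter> {x. primitive_elem x \<and> x \<in> W \<inter> \<Inter>T} = {x \<in> W \<inter> \<Inter>T. primitive_elem x}" by blast
    have e1: "(\<Sum>x\<in>W. (of_bool (primitive_elem x \<and> x \<in> W \<inter> \<Inter>T) :: real)) = real (card (W \<inter> {x. primitive_elem x \<and> x \<in> W \<inter> \<Inter>T}))"
      by (rule sum_of_bool_eq) simp_all
    have "(\<Sum>x\<in>W. of_bool (primitive_elem x \<and> x \<in> W \<inter> \<Inter>T)) = real (card {x \<in> W \<inter> \<Inter>T. primitive_elem x})"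
      using e1 unfolding e2 .
    then show "(-1) ^ card T * (\<Sum>x\<in>W. of_bool (primitive_elem x \<and> x \<in> W \<inter> \<Inter>T)) =
        (-1) ^ card T * real (card {x \<in> W \<inter> \<Inter>T. primitive_elem x})" by simp
  qed
  also have "\<dots> = (\<Sum>T\<in>Pow MM. (-1) ^ card T * (theta * (real (card (W \<inter> \<Inter>T)) - 1) + e T))"
    unfolding e_def by simp
  also have "\<dots> = theta * G - theta * (\<Sum>T\<in>Pow MM. (-1) ^ card T) + (\<Sum>T\<in>Pow MM. (-1) ^ card T * e T)"
    unfolding G_def by (simp add: algebra_simps sum.distrib sum_subtractf sum_distrib_left)
  also have "\<dots> = theta * G + (\<Sum>T\<in>Pow MM. (-1) ^ card T * e T)"
    using sum_pow_minus_one[OF finMM MMne] by simp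
  finally have cG: "real (card Gd) = theta * G + (\<Sum>T\<in>Pow MM. (-1) ^ card T * e T)" .
  have "\<bar>\<Sum>T\<in>Pow MM. (-1) ^ card T * e T\<bar> \<le> (\<Sum>T\<in>Pow MM. \<bar>(-1) ^ card T * e T\<bar>)"
    by (rule sum_abs)
  also have "\<dots> \<le> (\<Sum>T\<in>Pow MM. E)"
    by (rule sum_mono) (simp add: abs_mult eb)
  also have "\<dots> = 2 ^ r * E" unfolding r_def using finMM by (simp add: card_Pow)
  finally have errb: "\<bar>\<Sum>T\<in>Pow MM. (-1) ^ card T * e T\<bar> \<le> 2 ^ r * E" .
  have main: "theta * real q ^ s * (1 - 1 / real q) ^ r > 2 ^ r * 2 ^ card PF * sqrt (real q ^ n)"
  proof (rule final_ineq[OF q n16 s8 rs theta_pos X_bound])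
    show "real mQ < real q ^ n" using Q_eq by (simp only: of_nat_power[symmetric] of_nat_less_iff)
  qed
  have "theta * G \<ge> theta * (real q ^ s * (1 - 1 / real q) ^ r)"
    using G_ge theta_pos cW by (intro mult_left_mono) (simp_all add: of_nat_power)
  then have "real (card Gd) > 0" using cG errb main unfolding E_def by (simp add: of_nat_power mult_ac)
  then obtain x where x: "x \<in> Gd" by (metis card.empty less_irrefl of_nat_0 ex_in_conv)
  then have xW: "x \<in> W" and xp: "primitive_elem x" and xM: "\<forall>M. maxi M \<longrightarrow> x \<notin> M"
    unfolding Gd_def MM_def by auto
  have "k_normal F q n k x" by (rule good_is_kn[OF xW xM kn]) (simp add: cW s_def)
  then show ?thesis using xp by blast
qed

end

theorem corollary3p6:
  fixes F :: "'a::{field,finite} set" and q n k :: nat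
  assumes "prime_power q" and "n > 0"
    and "is_subfield F" and "card F = q" and "card (UNIV :: 'a set) = q ^ n"
    and "(q \<ge> 567 \<and> n \<ge> 16) \<or> (q \<ge> 435 \<and> n \<ge> 24) \<or> (q \<ge> 381 \<and> n \<ge> 32) \<or>
         (q \<ge> 352 \<and> n \<ge> 40) \<or> (q \<ge> 334 \<and> n \<ge> 48) \<or> (q \<ge> 301 \<and> n \<ge> 80)"
    and "8 * k \<le> n"
    and "\<exists>\<alpha>::'a. k_normal F q n k \<alpha>"
  shows "\<exists>\<alpha>::'a. k_normal F q n k \<alpha> \<and> primitive_elem \<alpha>"
proof -
  interpret ctx F q n using assms(1-5) by unfold_locales
  obtain a0 where a0: "k_normal F q n k a0" using assms(8) by blast
  interpret rctx F q n a0 by unfold_locales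
  have q: "q \<ge> 301" and n: "n \<ge> 16" using assms(6) by auto
  show ?thesis by (rule exists_good[OF a0 q n assms(7)])
qed


end
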